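(* Under the model described in the context, but with prior $f(\textbf q)=I\{g(\textbf q,\textbf Q)\le\omega\}$ for some $\omega>0$, where $g(\textbf{q},\textbf{Q})=\mathrm{trace}[(\textbf{I}_{N},\bm{0}_{N,N+p+r})\textbf{Q}\textbf{q}\textbf{q}^{\prime}\textbf{Q}^{\prime}(\textbf{I}_{N},\bm{0}_{N,N+p+r})^{\prime}]$, and assuming the set $R=\{(\bm\zeta,\textbf q): g(\textbf q,\textbf Q)\le\omega\}$ has positive probability under $\mathrm{GCM}(\bm{\alpha}_{M},\bm{\kappa}_{M},\bm{\mu}_{M},\textbf{V}_{M},\pi,\textbf{D};\bm{\psi}_{M})$ (with $\textbf V_M^{-1}=(\textbf H,\textbf Q)$, $\bm\mu_M=\textbf V_M\textbf c$), the posterior of $(\bm\zeta',\textbf q')'$ given $\textbf z$ is this GCM truncated to $R$, i.e. has density equal to the GCM density times $I\{(\bm\zeta,\textbf q)\in R\}$ divided by the GCM probability of $R$. Moreover, for any $\textbf w\in\mathbb R^{2N+p+r}$, setting $\bm\zeta_{rep}=(\textbf H'\textbf H)^{-1}\textbf H'\textbf w$, $\textbf q_{rep}=\textbf Q'\textbf w$, $\textbf y_{rep}=(\textbf I_N,\bm0_{N,N+p+r})\textbf w$ and $\widehat{\textbf y}_{rep}=(\textbf I_N,\bm0_{N,N+p+r})\textbf H\bm\zeta_{rep}$ ($=\textbf X\bm\beta_{rep}+\textbf G\bm\eta_{rep}+\bm\xi_{rep}$ where $\bm\zeta_{rep}=(\bm\xi_{rep}',\bm\beta_{rep}',\bm\eta_{rep}')'$),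 one has $g(\textbf{q}_{rep},\textbf{Q})=(\textbf{y}_{rep}-\widehat{\textbf{y}}_{rep})^{\prime}(\textbf{y}_{rep}-\widehat{\textbf{y}}_{rep})$.
   Context: Notation: $\bm{0}_{a,b}$, $\bm{1}_{a,b}$ are the $a\times b$ zero and ones matrices, $\textbf{I}_n$ the identity, $\mathrm{blkdiag}$ the block-diagonal operator. $\psi_1(x)=x^2$, $\psi_2(x)=e^x$, $\psi_3(x)=\log(1+e^x)$, $\psi_4(x)=\log(1+x^2/\nu)$ with known $\nu>0$. A univariate DY density with unit log-partition $\psi$ and parameters $(\alpha,\kappa)$ is $\mathcal{N}(\alpha,\kappa)\exp\{\alpha w-\kappa\psi(w)\}$ ($\mathcal N$ the normalizing constant). $\mathrm{GCM}(\bm{\alpha},\bm{\kappa},\bm{\mu},\textbf{V},\pi,\textbf{D};\bm{\psi})$ on $\mathbb{R}^M$ denotes the law of $\bm{\mu}+\textbf{V}\textbf{D}(\bm{\theta})\textbf{w}$, where $\bm\theta\in\Omega$ has proper density $\pi$, $\textbf D(\bm\theta)$ is invertible, $\textbf V$ invertible, and $\textbf w$ (independent of $\bm\theta$) has independent coordinates, coordinate $l$ having DY density with parameters $(\alpha_l,\kappa_l)$ and unit log-partition $\psi_{(l)}$, where $\bm\psi=(\psi_{(1)},\ldots,\psi_{(M)})$ acts coordinatewise; its density is $\int_\Omega\pi(\bm\theta)\frac{\prod_l\mathcal N(\alpha_l,\kappa_l)}{|\det\textbf D(\bm\theta)||\det\textbf V|}\exp[\bm\alpha'\textbf D(\bm\theta)^{-1}\textbf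 V^{-1}(\textbf y-\bm\mu)-\bm\kappa'\bm\psi\{\textbf D(\bm\theta)^{-1}\textbf V^{-1}(\textbf y-\bm\mu)\}]d\bm\theta$. Model: data $\textbf{z}=(\textbf{z}_1',\ldots,\textbf{z}_4')'$, $\textbf{z}_k=(Z_{k,1},\ldots,Z_{k,n_k})'$, $N=n_1+\cdots+n_4$, latent $\textbf{y}_k=(Y_{k,1},\ldots,Y_{k,n_k})'$; conditionally independently, $Z_{1,i}\mid Y_{1,i}\sim N(Y_{1,i},\sigma_i^2)$ with $\sigma_i^2>0$ known, $Z_{2,i}\mid Y_{2,i}\sim\mathrm{Poisson}(e^{Y_{2,i}})$, $Z_{3,i}\mid Y_{3,i}\sim\mathrm{Binomial}(m_i,e^{Y_{3,i}}/(1+e^{Y_{3,i}}))$ with known $\textbf m=(m_1,\ldots,m_{n_3})'$, and $Z_{4,i}\mid Y_{4,i}$ has density proportional to $\{1+(Z_{4,i}-Y_{4,i})^2/\nu\}^{-(\nu+1)/2}$. $\textbf{D}_\sigma=\mathrm{diag}(1/\sigma_i^2)$. With known $\textbf X_k$ ($n_k\times p$), $\textbf G_k$ ($n_k\times r$), $\textbf X=(\textbf X_1',\ldots,\textbf X_4')'$, $\textbf G=(\textbf G_1',\ldots,\textbf G_4')'$, set $\textbf y=(\textbf y_1',\ldots,\textbf y_4')'=\textbf X\bm\beta+\textbf G\bm\eta+\bm\xi-\bm\mu_D$, where $\bm\mu_D=(\bm\mu_1',\ldots,\bm\mu_4')'\in\mathbb R^N$, and $\bm\zeta=(\bm\xi',\bm\beta',\bm\eta')'\in\mathbb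 R^{N+p+r}$. Let $\bm\theta\in\Omega$ have proper prior $\pi$, with invertible $\textbf D_\beta(\bm\theta)$ ($p\times p$) and $\textbf D_\eta(\bm\theta)$ ($r\times r$). Prior factor for $\bm\beta$: $|\det\textbf D_\beta(\bm\theta)|^{-1}\exp[\bm\alpha_\beta'\textbf D_\beta(\bm\theta)^{-1}(\bm\beta-\bm\mu_\beta)-\bm\kappa_\beta'\bm\psi_\beta\{\textbf D_\beta(\bm\theta)^{-1}(\bm\beta-\bm\mu_\beta)\}]$ with known $\bm\alpha_\beta,\bm\kappa_\beta$ and coordinatewise DY unit log-partitions $\bm\psi_\beta$; analogously for $\bm\eta$ with $\textbf D_\eta,\bm\mu_\eta,\bm\alpha_\eta,\bm\kappa_\eta,\bm\psi_\eta$. Prior factor for $\bm\xi$ (fixed $\sigma_\xi^2>0$, $\alpha_\xi>0$): $\exp[\bm\alpha_\xi'(\textbf A\bm\zeta-\textbf m_\xi)-\bm\kappa_\xi'\bm\psi_\xi(\textbf A\bm\zeta-\textbf m_\xi)]$ with $\textbf A=\begin{pmatrix}\textbf I_N&\textbf X&\textbf G\\ \sigma_\xi^{-2}\textbf I_N&\bm 0_{N,p}&\bm 0_{N,r}\end{pmatrix}$, $\textbf m_\xi=(\bm\mu_D',\bm\mu_\xi')'$, $\bm\alpha_\xi=(\bm 0_{1,n_1},\alpha_\xi\bm 1_{1,n_2},\alpha_\xi\bm 1_{1,n_3},\bm 0_{1,n_4+N})'$, $\bm\kappa_\xi=(\bm 0_{1,n_1+n_2},2\alpha_\xi\bm 1_{1,n_3},\bm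 0_{1,n_4},\frac12\bm 1_{1,N})'$, and $\bm\psi_\xi$ applying $\psi_k$ to the $k$-th block of the first $N$ coordinates and $\psi_1$ to the last $N$. Let $\textbf H=\begin{pmatrix}\textbf I_N&\textbf X&\textbf G\\ \bm0_{p,N}&\textbf I_p&\bm0_{p,r}\\ \bm0_{r,N}&\bm0_{r,p}&\textbf I_r\\ \textbf I_N&\bm0_{N,p}&\bm0_{N,r}\end{pmatrix}$ ($(2N+p+r)\times(N+p+r)$) and $\textbf Q$ a $(2N+p+r)\times N$ matrix with orthonormal columns satisfying $\textbf H'\textbf Q=\bm0$ (so $\textbf Q\textbf Q'=\textbf I-\textbf H(\textbf H'\textbf H)^{-1}\textbf H'$). Let $\textbf D(\bm\theta)^{-1}=\mathrm{blkdiag}(\textbf I_N,\textbf D_\beta(\bm\theta)^{-1},\textbf D_\eta(\bm\theta)^{-1},\sigma_\xi^{-2}\textbf I_N)$. The location parameters satisfy $(\bm\mu_D',\bm\mu_\beta',\bm\mu_\eta',\bm\mu_\xi')'=-\textbf D(\bm\theta)^{-1}\textbf Q\textbf q$ for the bypass location parameter $\textbf q\in\mathbb R^N$. The posterior is defined by $f(\bm\zeta,\textbf q\mid\textbf z)\propto\int_\Omega\pi(\bm\theta)f(\textbf z\mid\bm\zeta,\textbf q)\,[\bm\xi\text{ factor}][\bm\beta\text{ factor}][\bm\eta\text{ factor}]f(\textbf q)\,d\bm\theta$. Parameters: $\textbf c=(\bm0_{1,n_1+n_2+n_3},\textbf z_4',\bm0_{1,N+p+r})'$, $\bm\alpha_M=(\textbf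 z_1'\textbf D_\sigma,\textbf z_2'+\alpha_\xi\bm1_{1,n_2},\textbf z_3'+\alpha_\xi\bm1_{1,n_3},\bm0_{1,n_4},\bm\alpha_\beta',\bm\alpha_\eta',\bm0_{1,N})'$, $\bm\kappa_M=(\frac12\bm1_{1,n_1}\textbf D_\sigma,\bm1_{1,n_2},\textbf m'+2\alpha_\xi\bm1_{1,n_3},\frac{\nu+1}2\bm1_{1,n_4},\bm\kappa_\beta',\bm\kappa_\eta',\frac12\bm1_{1,N})'$, and $\bm\psi_M$ applies $\psi_k$ to the $k$-th data block of the first $N$ coordinates, $\bm\psi_\beta$ to the next $p$, $\bm\psi_\eta$ to the next $r$, and $\psi_1$ to the last $N$. *)

theory Defs
  imports "HOL-Probability.Probability" "Jordan_Normal_Form.Determinant"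
begin

definition minv :: "real mat \<Rightarrow> real mat" where
  "minv A = (SOME B. B \<in> carrier_mat (dim_col A) (dim_row A) \<and> inverts_mat A B \<and> inverts_mat B A)"

definition hcat :: "real mat \<Rightarrow> real mat \<Rightarrow> real mat" where
  "hcat A B = mat (dim_row A) (dim_col A + dim_col B)
     (\<lambda>(i,j). if j < dim_col A then A $$ (i,j) else B $$ (i, j - dim_col A))"

definition vcat :: "real mat \<Rightarrow> real mat \<Rightarrow> real mat" where
  "vcat A B = mat (dim_row A + dim_row B) (dim_col A)
     (\<lambda>(i,j). if i < dim_row A then A $$ (i,j) else B $$ (i - dim_row A, j))"

definition blkdiag :: "real mat \<Rightarrow> real mat \<Rightarrow> real mat" where
  "blkdiag A B = four_block_mat A (0\<^sub>m (dim_row A) (dim_col B)) (0\<^sub>m (dim_row B) (dim_col A)) B"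

definition vblock :: "real vec \<Rightarrow> nat \<Rightarrow> nat \<Rightarrow> real vec" where
  "vblock v a b = Matrix.vec b (\<lambda>i. v $ (a + i))"

definition outer :: "real vec \<Rightarrow> real mat" where
  "outer v = mat (dim_vec v) (dim_vec v) (\<lambda>(i,j). v $ i * v $ j)"

definition mtrace :: "real mat \<Rightarrow> real" where
  "mtrace A = (\<Sum>i<dim_row A. A $$ (i,i))"

definition psi1 :: "real \<Rightarrow> real" where "psi1 x = x\<^sup>2"
definition psi2 :: "real \<Rightarrow> real" where "psi2 x = exp x"
definition psi3 :: "real \<Rightarrow> real" where "psi3 x = ln (1 + exp x)"
definition psi4 :: "real \<Rightarrow> real \<Rightarrow> real" where "psi4 \<nu> x = ln (1 + x\<^sup>2 / \<nu>)"

text \<open>psi_k on the k-th data block of a length-N vector (blocks of sizes n1, n2, n3, n4).\<close>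
definition blk_psi :: "nat \<Rightarrow> nat \<Rightarrow> nat \<Rightarrow> real \<Rightarrow> nat \<Rightarrow> real \<Rightarrow> real" where
  "blk_psi n1 n2 n3 \<nu> l = (if l < n1 then psi1 else if l < n1 + n2 then psi2
                            else if l < n1 + n2 + n3 then psi3 else psi4 \<nu>)"

definition DY_const :: "real \<Rightarrow> real \<Rightarrow> (real \<Rightarrow> real) \<Rightarrow> real" where
  "DY_const \<alpha> \<kappa> \<psi> = 1 / (\<integral>w. exp (\<alpha> * w - \<kappa> * \<psi> w) \<partial>lborel)"

text \<open>Density of GCM(alpha, kappa, mu, V, pi, D; psi) on R^M (M = dim alpha), where theta
  ranges over the measure space Theta and pi is a density w.r.t. Theta.\<close>
definition gcm_density :: "'a measure \<Rightarrow> ('a \<Rightarrow> real) \<Rightarrow> real vec \<Rightarrow> real vec \<Rightarrow> real vec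
    \<Rightarrow> real mat \<Rightarrow> ('a \<Rightarrow> real mat) \<Rightarrow> (nat \<Rightarrow> real \<Rightarrow> real) \<Rightarrow> real vec \<Rightarrow> real" where
  "gcm_density \<Theta> \<pi> \<alpha> \<kappa> \<mu> V D \<psi> y =
     (\<integral>\<theta>. (let t = minv (D \<theta>) *\<^sub>v (minv V *\<^sub>v (y - \<mu>)) in
        \<pi> \<theta> * (\<Prod>l<dim_vec \<alpha>. DY_const (\<alpha> $ l) (\<kappa> $ l) (\<psi> l))
          / (\<bar>det (D \<theta>)\<bar> * \<bar>det V\<bar>)
          * exp (scalar_prod \<alpha> t - (\<Sum>l<dim_vec \<alpha>. \<kappa> $ l * \<psi> l (t $ l)))) \<partial>\<Theta>)"

definition vint :: "nat \<Rightarrow> (real vec \<Rightarrow> real) \<Rightarrow> real" where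
  "vint M f = (\<integral>x. f (Matrix.vec M x) \<partial>(PiM {..<M} (\<lambda>_. lborel)))"

end

theory Submission
  imports Defs
begin



no_notation vec_nth (infixl "$" 90)

lemma minv_unique:
  assumes A: "A \<in> carrier_mat n n" and B: "B \<in> carrier_mat n n" and AB: "A * B = 1\<^sub>m n"
  shows "minv A = B"
proof -
  have BA: "B * A = 1\<^sub>m n" using mat_mult_left_right_inverse[OF A B AB] .
  let ?P = "\<lambda>C. C \<in> carrier_mat (dim_col A) (dim_row A) \<and> inverts_mat A C \<and> inverts_mat C A"
  have "?P B" using A B AB BA unfolding inverts_mat_def by auto
  hence P: "?P (minv A)" unfolding minv_def by (rule someI)
  define C where "C = minv A"
  have C: "C \<in> carrier_mat n n" using P A unfolding C_def by auto
  have CA: "C * A = 1\<^sub>m n" using P C unfolding C_def inverts_mat_def by auto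
  have "C = C * (A * B)" using C AB by simp
  also have "\<dots> = (C * A) * B" using A B C by (simp add: assoc_mult_mat)
  also have "\<dots> = B" using CA B by simp
  finally show ?thesis unfolding C_def .
qed

lemma minv_inv:
  assumes A: "A \<in> carrier_mat n n" and B: "B \<in> carrier_mat n n" and AB: "A * B = 1\<^sub>m n"
  shows "minv B = A"
  using minv_unique[OF B A mat_mult_left_right_inverse[OF A B AB]] .

lemma hcat_carrier[simp]: "A \<in> carrier_mat n a \<Longrightarrow> B \<in> carrier_mat n b \<Longrightarrow> hcat A B \<in> carrier_mat n (a + b)"
  unfolding hcat_def by auto

lemma vcat_carrier[simp]: "A \<in> carrier_mat a m \<Longrightarrow> B \<in> carrier_mat b m \<Longrightarrow> vcat A B \<in> carrier_mat (a + b) m"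
  unfolding vcat_def by auto

lemma dim_hcat[simp]: "dim_row (hcat A B) = dim_row A" "dim_col (hcat A B) = dim_col A + dim_col B"
  unfolding hcat_def by auto

lemma dim_vcat[simp]: "dim_row (vcat A B) = dim_row A + dim_row B" "dim_col (vcat A B) = dim_col A"
  unfolding vcat_def by auto

lemma row_hcat: assumes "A \<in> carrier_mat n a" "B \<in> carrier_mat n b" "i < n"
  shows "row (hcat A B) i = row A i @\<^sub>v row B i"
  by (rule eq_vecI, insert assms, auto simp: hcat_def)

lemma col_vcat: assumes "A \<in> carrier_mat a m" "B \<in> carrier_mat b m" "j < m"
  shows "col (vcat A B) j = col A j @\<^sub>v col B j"
  by (rule eq_vecI, insert assms, auto simp: vcat_def)

lemma hcat_mult_vec: assumes A: "A \<in> carrier_mat n a" and B: "B \<in> carrier_mat n b"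
  and u: "u \<in> carrier_vec a" and v: "v \<in> carrier_vec b"
  shows "hcat A B *\<^sub>v (u @\<^sub>v v) = A *\<^sub>v u + B *\<^sub>v v"
proof (rule eq_vecI)
  fix i assume "i < dim_vec (A *\<^sub>v u + B *\<^sub>v v)"
  hence i: "i < n" using A B by auto
  show "(hcat A B *\<^sub>v (u @\<^sub>v v)) $ i = (A *\<^sub>v u + B *\<^sub>v v) $ i"
    using i A B u v by (simp add: row_hcat scalar_prod_append[of _ a _ b])
qed (insert A B, auto)

lemma vcat_mult_vec: assumes A: "A \<in> carrier_mat a m" and B: "B \<in> carrier_mat b m"
  shows "vcat A B *\<^sub>v v = (A *\<^sub>v v) @\<^sub>v (B *\<^sub>v v)"
proof (rule eq_vecI)
  fix i assume "i < dim_vec ((A *\<^sub>v v) @\<^sub>v (B *\<^sub>v v))"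
  hence i: "i < a + b" using A B by auto
  have r: "row (vcat A B) i = (if i < a then row A i else row B (i - a))"
    by (rule eq_vecI, insert i A B, auto simp: vcat_def)
  show "(vcat A B *\<^sub>v v) $ i = ((A *\<^sub>v v) @\<^sub>v (B *\<^sub>v v)) $ i"
    using i A B by (simp add: r)
qed (insert A B, auto)

lemma hcat_vcat_mult: assumes A: "A \<in> carrier_mat n a" and B: "B \<in> carrier_mat n b"
  and C: "C \<in> carrier_mat a m" and D: "D \<in> carrier_mat b m"
  shows "hcat A B * vcat C D = A * C + B * D"
proof (rule eq_matI)
  fix i j assume "i < dim_row (A * C + B * D)" "j < dim_col (A * C + B * D)"
  hence i: "i < n" and j: "j < m" using A B D by auto
  show "(hcat A B * vcat C D) $$ (i, j) = (A * C + B * D) $$ (i, j)"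
    using i j A B C D by (simp add: row_hcat col_vcat scalar_prod_append[of _ a _ b])
qed (insert A B C D, auto)

lemma blkdiag_carrier[simp]: "A \<in> carrier_mat a a' \<Longrightarrow> B \<in> carrier_mat b b' \<Longrightarrow> blkdiag A B \<in> carrier_mat (a + b) (a' + b')"
  unfolding blkdiag_def by auto

lemma zero_mat_mult_vec[simp]: "v \<in> carrier_vec b \<Longrightarrow> 0\<^sub>m a b *\<^sub>v v = 0\<^sub>v a"
  by (rule eq_vecI, auto)

lemma blkdiag_mult_vec: assumes A: "A \<in> carrier_mat a a'" and B: "B \<in> carrier_mat b b'"
  and u: "u \<in> carrier_vec a'" and v: "v \<in> carrier_vec b'"
  shows "blkdiag A B *\<^sub>v (u @\<^sub>v v) = (A *\<^sub>v u) @\<^sub>v (B *\<^sub>v v)"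
proof -
  have "blkdiag A B *\<^sub>v (u @\<^sub>v v) = (A *\<^sub>v u + 0\<^sub>m a b' *\<^sub>v v) @\<^sub>v (0\<^sub>m b a' *\<^sub>v u + B *\<^sub>v v)"
    unfolding blkdiag_def using A B u v by (simp add: four_block_mat_mult_vec[OF A zero_carrier_mat zero_carrier_mat B u v])
  also have "\<dots> = (A *\<^sub>v u) @\<^sub>v (B *\<^sub>v v)" using A B u v by simp
  finally show ?thesis .
qed

lemma blkdiag_mult: assumes A: "A \<in> carrier_mat a a" and B: "B \<in> carrier_mat b b"
  and C: "C \<in> carrier_mat a a" and D: "D \<in> carrier_mat b b"
  shows "blkdiag A B * blkdiag C D = blkdiag (A * C) (B * D)"
  unfolding blkdiag_def using A B C D
  by (simp add: mult_four_block_mat[OF A zero_carrier_mat zero_carrier_mat B C zero_carrier_mat zero_carrier_mat D])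

lemma blkdiag_one: "blkdiag (1\<^sub>m a) (1\<^sub>m b) = 1\<^sub>m (a + b)"
  unfolding blkdiag_def by simp

lemma det_blkdiag: assumes A: "A \<in> carrier_mat a a" and B: "B \<in> carrier_mat b b"
  shows "det (blkdiag A B) = det A * det B"
  unfolding blkdiag_def using A B
  by (intro det_four_block_mat_lower_left_zero) auto

lemma sum_split_nat: "(\<Sum>l<a + b. f l) = (\<Sum>l<a. f l) + (\<Sum>l<b. f (a + l :: nat))"
  by (induction b) (auto simp: add.assoc)

lemma prod_split_nat: "(\<Prod>l<a + b. f l) = (\<Prod>l<a. f l) * (\<Prod>l<b. f (a + l :: nat))"
  by (induction b) (auto simp: mult.assoc)

lemma dim_vblock[simp]: "dim_vec (vblock v a b) = b" and vblock_carrier[simp]: "vblock v a b \<in> carrier_vec b"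
  unfolding vblock_def by auto

lemma index_vblock[simp]: "i < b \<Longrightarrow> vblock v a b $ i = v $ (a + i)"
  unfolding vblock_def by auto

lemma vblock_split3: assumes "v \<in> carrier_vec (a + b + c)"
  shows "v = (vblock v 0 a @\<^sub>v vblock v a b) @\<^sub>v vblock v (a + b) c"
  by (rule eq_vecI, insert assms, auto simp: vblock_def)

lemma vblock_split4: assumes "v \<in> carrier_vec (a + b + c + d)"
  shows "v = ((vblock v 0 a @\<^sub>v vblock v a b) @\<^sub>v vblock v (a + b) c) @\<^sub>v vblock v (a + b + c) d"
  by (rule eq_vecI, insert assms, auto simp: vblock_def)

lemma vblock_app4:
  assumes a: "u1 \<in> carrier_vec n1" and b: "u2 \<in> carrier_vec n2" and c: "u3 \<in> carrier_vec n3" and d: "u4 \<in> carrier_vec n4"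
  shows "vblock (((u1 @\<^sub>v u2) @\<^sub>v u3) @\<^sub>v u4) 0 n1 = u1"
    "vblock (((u1 @\<^sub>v u2) @\<^sub>v u3) @\<^sub>v u4) n1 n2 = u2"
    "vblock (((u1 @\<^sub>v u2) @\<^sub>v u3) @\<^sub>v u4) (n1 + n2) n3 = u3"
    "vblock (((u1 @\<^sub>v u2) @\<^sub>v u3) @\<^sub>v u4) (n1 + n2 + n3) n4 = u4"
  by (rule eq_vecI, insert assms, auto simp: vblock_def)+

lemma vblock_uminus: "a + b \<le> dim_vec v \<Longrightarrow> vblock (- v) a b = - vblock v a b"
  by (rule eq_vecI, auto simp: vblock_def)

lemma append_vec_minus:
  assumes "v \<in> carrier_vec n" "v' \<in> carrier_vec n" "w \<in> carrier_vec m" "w' \<in> carrier_vec m"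
  shows "(v @\<^sub>v w) - (v' @\<^sub>v w') = (v - v') @\<^sub>v (w - w')"
  by (rule eq_vecI, insert assms, auto)

lemma append_vec_uminus:
  shows "- (v @\<^sub>v w) = (- v) @\<^sub>v (- w)"
  by (rule eq_vecI, auto)




lemma det_nonzero_minv:
  assumes A: "A \<in> carrier_mat n n" and d: "det A \<noteq> 0"
  shows "minv A \<in> carrier_mat n n \<and> A * minv A = 1\<^sub>m n \<and> minv A * A = 1\<^sub>m n"
proof -
  have "A \<in> Units (ring_mat TYPE(real) n ())" by (rule det_non_zero_imp_unit[OF A d])
  then obtain B where B: "B \<in> carrier_mat n n" and AB: "A * B = 1\<^sub>m n"
    unfolding Units_def by (auto simp: ring_mat_simps)
  have "minv A = B" by (rule minv_unique[OF A B AB])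
  thus ?thesis using B AB mat_mult_left_right_inverse[OF A B AB] by simp
qed

lemma H_carrier:
  assumes X: "X \<in> carrier_mat N p" and G: "G \<in> carrier_mat N r"
  and H: "H = vcat (vcat (vcat (hcat (hcat (1\<^sub>m N) X) G)
                             (hcat (hcat (0\<^sub>m p N) (1\<^sub>m p)) (0\<^sub>m p r)))
                       (hcat (hcat (0\<^sub>m r N) (0\<^sub>m r p)) (1\<^sub>m r)))
                 (hcat (hcat (1\<^sub>m N) (0\<^sub>m N p)) (0\<^sub>m N r))"
  shows "H \<in> carrier_mat (N + p + r + N) (N + p + r)"
  unfolding H using X G
  by (intro vcat_carrier hcat_carrier one_carrier_mat zero_carrier_mat; simp)

lemma H_mult_vec:
  assumes X: "X \<in> carrier_mat N p" and G: "G \<in> carrier_mat N r"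
  and H: "H = vcat (vcat (vcat (hcat (hcat (1\<^sub>m N) X) G)
                             (hcat (hcat (0\<^sub>m p N) (1\<^sub>m p)) (0\<^sub>m p r)))
                       (hcat (hcat (0\<^sub>m r N) (0\<^sub>m r p)) (1\<^sub>m r)))
                 (hcat (hcat (1\<^sub>m N) (0\<^sub>m N p)) (0\<^sub>m N r))"
  and a: "a \<in> carrier_vec N" and b: "b \<in> carrier_vec p" and c: "c \<in> carrier_vec r"
  shows "H *\<^sub>v ((a @\<^sub>v b) @\<^sub>v c) = (((a + X *\<^sub>v b + G *\<^sub>v c) @\<^sub>v b) @\<^sub>v c) @\<^sub>v a"
proof -
  have c1: "hcat (hcat (1\<^sub>m N) X) G \<in> carrier_mat N (N + p + r)" using X G by simp
  have c2: "hcat (hcat (0\<^sub>m p N) (1\<^sub>m p)) (0\<^sub>m p r) \<in> carrier_mat p (N + p + r)" by simp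
  have c3: "hcat (hcat (0\<^sub>m r N) (0\<^sub>m r p)) (1\<^sub>m r) \<in> carrier_mat r (N + p + r)" by simp
  have c4: "hcat (hcat (1\<^sub>m N) (0\<^sub>m N p)) (0\<^sub>m N r) \<in> carrier_mat N (N + p + r)" by simp
  have ab: "a @\<^sub>v b \<in> carrier_vec (N + p)" using a b by simp
  have e1: "hcat (hcat (1\<^sub>m N) X) G *\<^sub>v ((a @\<^sub>v b) @\<^sub>v c) = a + X *\<^sub>v b + G *\<^sub>v c"
    using X G a b c ab by (simp add: hcat_mult_vec[of _ N "N + p" _ r] hcat_mult_vec[of _ N N _ p])
  have e2: "hcat (hcat (0\<^sub>m p N) (1\<^sub>m p)) (0\<^sub>m p r) *\<^sub>v ((a @\<^sub>v b) @\<^sub>v c) = b"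
    using a b c ab by (simp add: hcat_mult_vec[of _ p "N + p" _ r] hcat_mult_vec[of _ p N _ p])
  have e3: "hcat (hcat (0\<^sub>m r N) (0\<^sub>m r p)) (1\<^sub>m r) *\<^sub>v ((a @\<^sub>v b) @\<^sub>v c) = c"
    using a b c ab by (simp add: hcat_mult_vec[of _ r "N + p" _ r] hcat_mult_vec[of _ r N _ p])
  have e4: "hcat (hcat (1\<^sub>m N) (0\<^sub>m N p)) (0\<^sub>m N r) *\<^sub>v ((a @\<^sub>v b) @\<^sub>v c) = a"
    using a b c ab by (simp add: hcat_mult_vec[of _ N "N + p" _ r] hcat_mult_vec[of _ N N _ p])
  show ?thesis unfolding H
    apply (subst vcat_mult_vec[of _ "N + p + r" "N + p + r" _ N])
      apply (rule vcat_carrier[OF vcat_carrier[OF c1 c2] c3])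
     apply (rule c4)
    apply (subst vcat_mult_vec[of _ "N + p" "N + p + r" _ r])
      apply (rule vcat_carrier[OF c1 c2])
     apply (rule c3)
    apply (subst vcat_mult_vec[of _ "N" "N + p + r" _ p])
      apply (rule c1)
     apply (rule c2)
    using e1 e2 e3 e4 by simp
qed




lemma self_scalar_prod_zero:
  fixes u :: "real vec"
  assumes "u \<bullet> u = 0"
  shows "u = 0\<^sub>v (dim_vec u)"
proof (rule eq_vecI)
  fix i assume i: "i < dim_vec (0\<^sub>v (dim_vec u) :: real vec)"
  have "(\<Sum>j\<in>{0..<dim_vec u}. u $ j * u $ j) = 0" using assms unfolding scalar_prod_def by simp
  hence "\<forall>j\<in>{0..<dim_vec u}. u $ j * u $ j = 0"
    by (subst sum_nonneg_eq_0_iff[symmetric]) auto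
  thus "u $ i = 0\<^sub>v (dim_vec u) $ i" using i by auto
qed simp

lemma HtH_inv:
  assumes X: "X \<in> carrier_mat N p" and G: "G \<in> carrier_mat N r"
  and H: "H = vcat (vcat (vcat (hcat (hcat (1\<^sub>m N) X) G)
                             (hcat (hcat (0\<^sub>m p N) (1\<^sub>m p)) (0\<^sub>m p r)))
                       (hcat (hcat (0\<^sub>m r N) (0\<^sub>m r p)) (1\<^sub>m r)))
                 (hcat (hcat (1\<^sub>m N) (0\<^sub>m N p)) (0\<^sub>m N r))"
  shows "minv (H\<^sup>T * H) \<in> carrier_mat (N + p + r) (N + p + r) \<and> H\<^sup>T * H * minv (H\<^sup>T * H) = 1\<^sub>m (N + p + r)
         \<and> minv (H\<^sup>T * H) * (H\<^sup>T * H) = 1\<^sub>m (N + p + r)"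
proof -
  let ?K = "N + p + r"
  have Hc: "H \<in> carrier_mat (?K + N) ?K" using H_carrier[OF X G H] .
  have HH: "H\<^sup>T * H \<in> carrier_mat ?K ?K" using Hc by simp
  have "det (H\<^sup>T * H) \<noteq> 0"
  proof
    assume "det (H\<^sup>T * H) = 0"
    then obtain v where v: "v \<in> carrier_vec ?K" and v0: "v \<noteq> 0\<^sub>v ?K" and Hv: "(H\<^sup>T * H) *\<^sub>v v = 0\<^sub>v ?K"
      using det_0_iff_vec_prod_zero[OF HH] by auto
    define u where "u = H *\<^sub>v v"
    have u: "u \<in> carrier_vec (?K + N)" unfolding u_def using Hc v by simp
    have "H\<^sup>T *\<^sub>v u = 0\<^sub>v ?K" unfolding u_def using Hv Hc v by simp
    moreover have "(H\<^sup>T *\<^sub>v u) \<bullet> v = u \<bullet> u"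
      unfolding u_def by (rule transpose_vec_mult_scalar[OF Hc v], insert Hc v, simp)
    ultimately have uu0: "u \<bullet> u = 0" using v by simp
    have u0: "u = 0\<^sub>v (?K + N)" using self_scalar_prod_zero[OF uu0] u by simp
    define v1 where "v1 = vblock v 0 N"
    define v2 where "v2 = vblock v N p"
    define v3 where "v3 = vblock v (N + p) r"
    have vv: "v = (v1 @\<^sub>v v2) @\<^sub>v v3" unfolding v1_def v2_def v3_def using vblock_split3 v by simp
    have uu: "u = (((v1 + X *\<^sub>v v2 + G *\<^sub>v v3) @\<^sub>v v2) @\<^sub>v v3) @\<^sub>v v1"
      unfolding u_def vv by (rule H_mult_vec[OF X G H], auto simp: v1_def v2_def v3_def)
    have "v = 0\<^sub>v ?K"
    proof (rule eq_vecI)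
      fix i assume "i < dim_vec (0\<^sub>v ?K :: real vec)"
      hence i: "i < ?K" by simp
      show "v $ i = 0\<^sub>v ?K $ i"
      proof (cases "i < N")
        case True
        have "u $ (?K + i) = v1 $ i" unfolding uu using True X G by (simp add: v1_def v2_def v3_def)
        thus ?thesis using True u0 by (simp add: v1_def)
      next
        case False
        have "u $ i = v $ i" unfolding uu using False i X G
          by (simp add: v1_def v2_def v3_def)
        thus ?thesis using i u0 by simp
      qed
    qed (insert v, auto)
    with v0 show False by simp
  qed
  from det_nonzero_minv[OF HH this] show ?thesis .
qed

lemma mult_outer: assumes A: "A \<in> carrier_mat k n" and q: "q \<in> carrier_vec n"
  shows "A * outer q = mat k n (\<lambda>(i,j). (A *\<^sub>v q) $ i * q $ j)"
proof (rule eq_matI)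
  fix i j assume "i < dim_row (mat k n (\<lambda>(i,j). (A *\<^sub>v q) $ i * q $ j))" "j < dim_col (mat k n (\<lambda>(i,j). (A *\<^sub>v q) $ i * q $ j))"
  hence i: "i < k" and j: "j < n" by auto
  have c: "col (outer q) j = q $ j \<cdot>\<^sub>v q"
    by (rule eq_vecI, insert j q, auto simp: outer_def)
  show "(A * outer q) $$ (i, j) = mat k n (\<lambda>(i,j). (A *\<^sub>v q) $ i * q $ j) $$ (i, j)"
  proof -
    have "(A * outer q) $$ (i, j) = row A i \<bullet> col (outer q) j"
      using i j A q by (simp add: outer_def)
    also have "\<dots> = (A *\<^sub>v q) $ i * q $ j" unfolding c using i j A q by simp
    finally show ?thesis using i j by simp
  qed
qed (insert A q, auto simp: outer_def)

lemma mtrace_outer: assumes A: "A \<in> carrier_mat k n" and q: "q \<in> carrier_vec n"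
  shows "mtrace (A * outer q * A\<^sup>T) = (A *\<^sub>v q) \<bullet> (A *\<^sub>v q)"
proof -
  have d: "(A * outer q * A\<^sup>T) $$ (i, i) = (A *\<^sub>v q) $ i * (A *\<^sub>v q) $ i" if i: "i < k" for i
  proof -
    have r: "row (mat k n (\<lambda>(i,j). (A *\<^sub>v q) $ i * q $ j)) i = (A *\<^sub>v q) $ i \<cdot>\<^sub>v q"
      by (rule eq_vecI, insert i q, auto)
    have "(A * outer q * A\<^sup>T) $$ (i, i) = row (mat k n (\<lambda>(i,j). (A *\<^sub>v q) $ i * q $ j)) i \<bullet> row A i"
      unfolding mult_outer[OF A q] using i A by simp
    also have "\<dots> = (A *\<^sub>v q) $ i * (q \<bullet> row A i)" unfolding r using A q i by simp
    also have "q \<bullet> row A i = (A *\<^sub>v q) $ i" using i A q by (simp add: comm_scalar_prod[of _ n])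
    finally show ?thesis .
  qed
  have "mtrace (A * outer q * A\<^sup>T) = (\<Sum>i<k. (A *\<^sub>v q) $ i * (A *\<^sub>v q) $ i)"
    unfolding mtrace_def using A q d by (simp add: outer_def)
  also have "\<dots> = (A *\<^sub>v q) \<bullet> (A *\<^sub>v q)" unfolding scalar_prod_def using A
    by (simp add: lessThan_atLeast0)
  finally show ?thesis .
qed




lemma part2:
  assumes X: "X \<in> carrier_mat N p" and G: "G \<in> carrier_mat N r"
  and H: "H = vcat (vcat (vcat (hcat (hcat (1\<^sub>m N) X) G)
                             (hcat (hcat (0\<^sub>m p N) (1\<^sub>m p)) (0\<^sub>m p r)))
                       (hcat (hcat (0\<^sub>m r N) (0\<^sub>m r p)) (1\<^sub>m r)))
                 (hcat (hcat (1\<^sub>m N) (0\<^sub>m N p)) (0\<^sub>m N r))"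
  and M: "M = 2 * N + p + r"
  and E: "E = hcat (1\<^sub>m N) (0\<^sub>m N (N + p + r))"
  and Q: "Q \<in> carrier_mat M N"
  and QQ: "Q * Q\<^sup>T = 1\<^sub>m M - H * minv (H\<^sup>T * H) * H\<^sup>T"
  and w: "w \<in> carrier_vec M"
  shows "mtrace (E * Q * outer (Q\<^sup>T *\<^sub>v w) * Q\<^sup>T * E\<^sup>T)
    = (E *\<^sub>v w - E *\<^sub>v (H *\<^sub>v (minv (H\<^sup>T * H) *\<^sub>v (H\<^sup>T *\<^sub>v w))))
      \<bullet> (E *\<^sub>v w - E *\<^sub>v (H *\<^sub>v (minv (H\<^sup>T * H) *\<^sub>v (H\<^sup>T *\<^sub>v w))))"
proof -
  let ?K = "N + p + r"
  let ?mi = "minv (H\<^sup>T * H)"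
  have "N + p + r + N = M" using M by simp
  hence NK: "N + ?K = M" by simp
  from \<open>N + p + r + N = M\<close> have Hc: "H \<in> carrier_mat M ?K" using H_carrier[OF X G H] by simp
  have mi: "?mi \<in> carrier_mat ?K ?K" using HtH_inv[OF X G H] by simp
  have Ec: "E \<in> carrier_mat N M" unfolding E
    using hcat_carrier[OF one_carrier_mat[of N] zero_carrier_mat[of N ?K]] unfolding NK .
  hence Ec': "E \<in> carrier_mat N M" .
  define q where "q = Q\<^sup>T *\<^sub>v w"
  have q: "q \<in> carrier_vec N" unfolding q_def using Q w by simp
  have EQ: "E * Q \<in> carrier_mat N N" using Ec Q by simp
  have "E * Q * outer q * Q\<^sup>T * E\<^sup>T = (E * Q) * outer q * (Q\<^sup>T * E\<^sup>T)"
  proof -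
    have oq: "outer q \<in> carrier_mat N N" using q by (simp add: outer_def)
    have oc: "E * Q * outer q \<in> carrier_mat N N" using mult_carrier_mat[OF EQ oq] .
    show ?thesis using assoc_mult_mat[OF oc, of "Q\<^sup>T" M "E\<^sup>T" N] Ec Q by simp
  qed
  also have "Q\<^sup>T * E\<^sup>T = (E * Q)\<^sup>T" using transpose_mult[OF Ec Q] by simp
  finally have "mtrace (E * Q * outer q * Q\<^sup>T * E\<^sup>T) = ((E * Q) *\<^sub>v q) \<bullet> ((E * Q) *\<^sub>v q)"
    using mtrace_outer[OF EQ q] by simp
  moreover have "(E * Q) *\<^sub>v q = E *\<^sub>v w - E *\<^sub>v (H *\<^sub>v (?mi *\<^sub>v (H\<^sup>T *\<^sub>v w)))"
  proof -
    have P: "H * ?mi * H\<^sup>T \<in> carrier_mat M M" using Hc mi by simp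
    have "(E * Q) *\<^sub>v q = E *\<^sub>v ((Q * Q\<^sup>T) *\<^sub>v w)" unfolding q_def using Ec Q w by simp
    also have "(Q * Q\<^sup>T) *\<^sub>v w = w - (H * ?mi * H\<^sup>T) *\<^sub>v w"
      unfolding QQ using P w by (simp add: minus_mult_distrib_mat_vec[OF one_carrier_mat P w])
    also have "(H * ?mi * H\<^sup>T) *\<^sub>v w = H *\<^sub>v (?mi *\<^sub>v (H\<^sup>T *\<^sub>v w))"
    proof -
      have a: "H * ?mi \<in> carrier_mat M ?K" using Hc mi by simp
      have "(H * ?mi * H\<^sup>T) *\<^sub>v w = (H * ?mi) *\<^sub>v (H\<^sup>T *\<^sub>v w)"
        using assoc_mult_mat_vec[OF a, of "H\<^sup>T" M w] Hc w by simp
      also have "\<dots> = H *\<^sub>v (?mi *\<^sub>v (H\<^sup>T *\<^sub>v w))"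
        using assoc_mult_mat_vec[OF Hc mi, of "H\<^sup>T *\<^sub>v w"] Hc w by simp
      finally show ?thesis .
    qed
    also have "E *\<^sub>v (w - H *\<^sub>v (?mi *\<^sub>v (H\<^sup>T *\<^sub>v w))) = E *\<^sub>v w - E *\<^sub>v (H *\<^sub>v (?mi *\<^sub>v (H\<^sup>T *\<^sub>v w)))"
      using Ec Hc mi w by (simp add: mult_minus_distrib_mat_vec[of _ N M])
    finally show ?thesis .
  qed
  ultimately show ?thesis unfolding q_def by simp
qed




lemma hQ_inv:
  assumes X: "X \<in> carrier_mat N p" and G: "G \<in> carrier_mat N r"
  and H: "H = vcat (vcat (vcat (hcat (hcat (1\<^sub>m N) X) G)
                             (hcat (hcat (0\<^sub>m p N) (1\<^sub>m p)) (0\<^sub>m p r)))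
                       (hcat (hcat (0\<^sub>m r N) (0\<^sub>m r p)) (1\<^sub>m r)))
                 (hcat (hcat (1\<^sub>m N) (0\<^sub>m N p)) (0\<^sub>m N r))"
  and M: "M = 2 * N + p + r"
  and Q: "Q \<in> carrier_mat M N"
  and QQ: "Q * Q\<^sup>T = 1\<^sub>m M - H * minv (H\<^sup>T * H) * H\<^sup>T"
  shows "hcat H Q \<in> carrier_mat M M \<and> hcat H Q * minv (hcat H Q) = 1\<^sub>m M \<and> minv (minv (hcat H Q)) = hcat H Q
     \<and> minv (hcat H Q) \<in> carrier_mat M M"
proof -
  let ?K = "N + p + r"
  let ?mi = "minv (H\<^sup>T * H)"
  have "N + p + r + N = M" using M by simp
  hence KN: "?K + N = M" by simp
  from \<open>N + p + r + N = M\<close> have Hc: "H \<in> carrier_mat M ?K" using H_carrier[OF X G H] by simp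
  have mi: "?mi \<in> carrier_mat ?K ?K" using HtH_inv[OF X G H] by simp
  have h: "hcat H Q \<in> carrier_mat M M" using hcat_carrier[OF Hc Q] unfolding KN .
  define L where "L = vcat (?mi * H\<^sup>T) Q\<^sup>T"
  have L: "L \<in> carrier_mat M M" unfolding L_def using vcat_carrier[of "?mi * H\<^sup>T" ?K M "Q\<^sup>T" N] mi Hc Q KN by simp
  have "hcat H Q * L = H * (?mi * H\<^sup>T) + Q * Q\<^sup>T"
    unfolding L_def by (rule hcat_vcat_mult[OF Hc Q], insert mi Hc Q, auto)
  also have "H * (?mi * H\<^sup>T) = H * ?mi * H\<^sup>T" using Hc mi by (simp add: assoc_mult_mat[of _ M ?K _ ?K _ M])
  also have "H * ?mi * H\<^sup>T + Q * Q\<^sup>T = 1\<^sub>m M"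
    unfolding QQ
  proof -
    have P: "H * ?mi * H\<^sup>T \<in> carrier_mat M M" using Hc mi by simp
    show "H * ?mi * H\<^sup>T + (1\<^sub>m M - H * ?mi * H\<^sup>T) = 1\<^sub>m M"
      by (rule eq_matI, insert P, auto)
  qed
  finally have hL: "hcat H Q * L = 1\<^sub>m M" .
  have mh: "minv (hcat H Q) = L" by (rule minv_unique[OF h L hL])
  have "minv L = hcat H Q" by (rule minv_inv[OF h L hL])
  thus ?thesis using h hL mh L by simp
qed

lemma minv_invertible:
  assumes A: "A \<in> carrier_mat n n" and inv: "invertible_mat A"
  shows "minv A \<in> carrier_mat n n \<and> A * minv A = 1\<^sub>m n \<and> minv A * A = 1\<^sub>m n"
proof -
  obtain B where AB: "inverts_mat A B" and BA: "inverts_mat B A" using inv unfolding invertible_mat_def by auto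
  have ABm: "A * B = 1\<^sub>m n" using AB A unfolding inverts_mat_def by simp
  have "dim_col B = n" using ABm A by (metis index_mult_mat(3) index_one_mat(3))
  moreover have "dim_row B = n" using BA A unfolding inverts_mat_def by (metis index_mult_mat(3) index_one_mat(3) carrier_matD(2))
  ultimately have B: "B \<in> carrier_mat n n" by auto
  have "minv A = B" by (rule minv_unique[OF A B ABm])
  thus ?thesis using B ABm mat_mult_left_right_inverse[OF A B ABm] by simp
qed

lemma Dinv_facts:
  assumes Db: "Db \<in> carrier_mat p p" "invertible_mat Db"
  and De: "De \<in> carrier_mat r r" "invertible_mat De"
  and s: "s > 0"
  and Dinv: "Dinv = blkdiag (blkdiag (blkdiag (1\<^sub>m N) (minv Db)) (minv De)) ((1 / s) \<cdot>\<^sub>m 1\<^sub>m N)"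
  shows "minv (minv Dinv) = Dinv" "det (minv Dinv) = det Db * det De * s ^ N"
    "Dinv \<in> carrier_mat (N + p + r + N) (N + p + r + N)"
proof -
  note ib = minv_invertible[OF Db]
  note ie = minv_invertible[OF De]
  define B where "B = blkdiag (blkdiag (blkdiag (1\<^sub>m N) Db) De) (s \<cdot>\<^sub>m 1\<^sub>m N)"
  have Dc: "Dinv \<in> carrier_mat (N + p + r + N) (N + p + r + N)" unfolding Dinv using ib ie
    by (intro blkdiag_carrier) auto
  have Bc: "B \<in> carrier_mat (N + p + r + N) (N + p + r + N)" unfolding B_def using Db De
    by (intro blkdiag_carrier) auto
  have "B * Dinv = blkdiag (blkdiag (blkdiag (1\<^sub>m N * 1\<^sub>m N) (Db * minv Db)) (De * minv De)) ((s \<cdot>\<^sub>m 1\<^sub>m N) * ((1 / s) \<cdot>\<^sub>m 1\<^sub>m N))"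
    unfolding B_def Dinv using Db De ib ie
    by (simp add: blkdiag_mult[of _ "N + p + r" _ N] blkdiag_mult[of _ "N + p" _ r] blkdiag_mult[of _ N _ p])
  also have "(s \<cdot>\<^sub>m 1\<^sub>m N) * ((1 / s) \<cdot>\<^sub>m 1\<^sub>m N) = (1\<^sub>m N :: real mat)"
    by (rule eq_matI, insert s, auto)
  also have "blkdiag (blkdiag (blkdiag (1\<^sub>m N * 1\<^sub>m N) (Db * minv Db)) (De * minv De)) (1\<^sub>m N) = 1\<^sub>m (N + p + r + N)" using ib ie s by (simp add: blkdiag_one)
  finally have BD: "B * Dinv = 1\<^sub>m (N + p + r + N)" .
  have m1: "minv Dinv = B" by (rule minv_inv[OF Bc Dc BD])
  show "minv (minv Dinv) = Dinv" unfolding m1 by (rule minv_unique[OF Bc Dc BD])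
  show "det (minv Dinv) = det Db * det De * s ^ N" unfolding m1 B_def using Db De
    by (simp add: det_blkdiag[of _ "N + p + r" _ N] det_blkdiag[of _ "N + p" _ r] det_blkdiag[of _ N _ p])
  show "Dinv \<in> carrier_mat (N + p + r + N) (N + p + r + N)" by (rule Dc)
qed




lemma lik_normal:
  fixes s y z :: real assumes s: "s > 0"
  shows "normal_density y (sqrt s) z * exp (0 * y - 0 * psi1 y)
     = (1 / sqrt (2 * pi * s) * exp (- z\<^sup>2 / (2 * s))) * exp (z / s * (y - 0) - 1 / (2 * s) * psi1 (y - 0))"
proof -
  have "- (z - y)\<^sup>2 / (2 * (sqrt s)\<^sup>2) = - z\<^sup>2 / (2 * s) + (z / s * y - 1 / (2 * s) * y\<^sup>2)"
    using s by (simp add: field_simps power2_eq_square)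
  hence "exp (- (z - y)\<^sup>2 / (2 * (sqrt s)\<^sup>2)) = exp (- z\<^sup>2 / (2 * s)) * exp (z / s * y - 1 / (2 * s) * y\<^sup>2)"
    by (simp add: exp_add[symmetric])
  thus ?thesis unfolding normal_density_def psi1_def using s by simp
qed

lemma lik_poisson:
  fixes y z a :: real assumes z: "z \<in> \<nat>"
  shows "pmf (poisson_pmf (exp y)) (nat \<lfloor>z\<rfloor>) * exp (a * y - 0 * psi2 y)
     = (1 / fact (nat \<lfloor>z\<rfloor>)) * exp ((z + a) * (y - 0) - 1 * psi2 (y - 0))"
proof -
  obtain k where k: "z = real k" using z by (auto elim: Nats_cases)
  have kz: "nat \<lfloor>z\<rfloor> = k" using k by simp
  have "exp y ^ k = exp (real k * y)" by (simp add: exp_of_nat_mult)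
  hence "pmf (poisson_pmf (exp y)) k = exp (real k * y) / fact k * exp (- exp y)"
    by (simp add: pmf_poisson)
  moreover have "exp ((real k + a) * y - exp y) = exp (real k * y) * exp (- exp y) * exp (a * y)"
    by (simp add: exp_add[symmetric] exp_diff algebra_simps)
  ultimately show ?thesis unfolding kz k psi2_def by (simp add: field_simps)
qed

lemma lik_binomial:
  fixes y z a :: real and mm :: nat assumes z: "z \<in> \<nat>" and zm: "z \<le> real mm"
  shows "pmf (binomial_pmf mm (exp y / (1 + exp y))) (nat \<lfloor>z\<rfloor>) * exp (a * y - 2 * a * psi3 y)
     = real (mm choose nat \<lfloor>z\<rfloor>) * exp ((z + a) * (y - 0) - (real mm + 2 * a) * psi3 (y - 0))"
proof -
  obtain k where k: "z = real k" using z by (auto elim: Nats_cases)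
  have kz: "nat \<lfloor>z\<rfloor> = k" using k by simp
  have km: "k \<le> mm" using zm k by simp
  define e where "e = exp y"
  have e: "e > 0" unfolding e_def by simp
  have p0: "0 \<le> e / (1 + e)" "e / (1 + e) \<le> 1" using e by auto
  have om: "1 - e / (1 + e) = 1 / (1 + e)" using e by (simp add: field_simps)
  have pk: "(e / (1 + e)) ^ k * (1 / (1 + e)) ^ (mm - k) = e ^ k / (1 + e) ^ mm"
  proof -
    have "(1 + e) ^ mm = (1 + e) ^ k * (1 + e) ^ (mm - k)" using km by (simp add: power_add[symmetric])
    thus ?thesis using e by (simp add: power_divide field_simps)
  qed
  have ek: "e ^ k = exp (real k * y)" unfolding e_def by (simp add: exp_of_nat_mult)
  have lm: "(1 + e) ^ mm = exp (real mm * ln (1 + e))" using e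
    by (subst exp_of_nat_mult) simp
  have l2: "exp (- (2 * a * ln (1 + e))) * exp (a * y) = exp (a * y - 2 * a * ln (1 + e))"
    by (simp add: exp_add[symmetric])
  have lhs: "pmf (binomial_pmf mm (e / (1 + e))) k = real (mm choose k) * (e ^ k / (1 + e) ^ mm)"
    using pmf_binomial[OF p0, of mm k] unfolding om using pk by (simp add: mult.assoc)
  have "exp ((real k + a) * y - (real mm + 2 * a) * ln (1 + e))
     = exp (real k * y) / exp (real mm * ln (1 + e)) * exp (a * y - 2 * a * ln (1 + e))"
    by (simp add: exp_diff[symmetric] exp_add[symmetric] algebra_simps)
  hence fin: "pmf (binomial_pmf mm (e / (1 + e))) k * exp (a * y - 2 * a * ln (1 + e))
      = real (mm choose k) * exp ((real k + a) * y - (real mm + 2 * a) * ln (1 + e))"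
    unfolding lhs ek lm by simp
  show ?thesis unfolding kz k psi3_def using fin unfolding e_def by simp
qed

lemma lik_student:
  fixes y z \<nu> :: real assumes \<nu>: "\<nu> > 0"
  shows "(1 + (z - y)\<^sup>2 / \<nu>) powr (- (\<nu> + 1) / 2) * exp (0 * y - 0 * psi4 \<nu> y)
     = 1 * exp (0 * (y - z) - (\<nu> + 1) / 2 * psi4 \<nu> (y - z))"
proof -
  have pos: "1 + (z - y)\<^sup>2 / \<nu> > 0" using \<nu> by (simp add: add_pos_nonneg)
  have "(z - y)\<^sup>2 = (y - z)\<^sup>2" by (simp add: power2_commute)
  thus ?thesis unfolding psi4_def powr_def using pos by (simp add: algebra_simps)
qed




lemma lik_block:
  fixes z :: "real vec" and \<sigma>2 :: "nat \<Rightarrow> real" and m :: "nat \<Rightarrow> nat"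
  assumes N: "N = n1 + n2 + n3 + n4"
    and \<sigma>2_pos: "\<forall>i<n1. \<sigma>2 i > 0"
    and z_pois: "\<forall>i<n2. z $ (n1 + i) \<in> \<nat>"
    and z_binom: "\<forall>i<n3. z $ (n1 + n2 + i) \<in> \<nat> \<and> z $ (n1 + n2 + i) \<le> real (m i)"
    and \<nu>_pos: "\<nu> > 0"
  shows "\<exists>C>0. \<forall>Y :: real vec.
    ((\<Prod>i<n1. normal_density (Y $ i) (sqrt (\<sigma>2 i)) (z $ i))
         * (\<Prod>i<n2. pmf (poisson_pmf (exp (Y $ (n1 + i)))) (nat \<lfloor>z $ (n1 + i)\<rfloor>))
         * (\<Prod>i<n3. pmf (binomial_pmf (m i) (exp (Y $ (n1 + n2 + i)) / (1 + exp (Y $ (n1 + n2 + i)))))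
                        (nat \<lfloor>z $ (n1 + n2 + i)\<rfloor>))
         * (\<Prod>i<n4. (1 + (z $ (n1 + n2 + n3 + i) - Y $ (n1 + n2 + n3 + i))\<^sup>2 / \<nu>) powr (- (\<nu> + 1) / 2)))
    * exp (\<Sum>l<N. (if n1 \<le> l \<and> l < n1 + n2 + n3 then \<alpha>\<xi> else 0) * Y $ l
                 - (if n1 + n2 \<le> l \<and> l < n1 + n2 + n3 then 2 * \<alpha>\<xi> else if N \<le> l then 1 / 2 else 0)
                   * blk_psi n1 n2 n3 \<nu> l (Y $ l))
    = C * exp (\<Sum>l<N. (if l < n1 then z $ l / \<sigma>2 l else if l < n1 + n2 + n3 then z $ l + \<alpha>\<xi> else 0)
                       * (Y $ l - (if n1 + n2 + n3 \<le> l \<and> l < N then z $ l else 0))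
                 - (if l < n1 then 1 / (2 * \<sigma>2 l) else if l < n1 + n2 then 1
                    else if l < n1 + n2 + n3 then real (m (l - n1 - n2)) + 2 * \<alpha>\<xi> else (\<nu> + 1) / 2)
                   * blk_psi n1 n2 n3 \<nu> l (Y $ l - (if n1 + n2 + n3 \<le> l \<and> l < N then z $ l else 0)))"
proof -
  define lf where "lf = (\<lambda>i y. if i < n1 then normal_density y (sqrt (\<sigma>2 i)) (z $ i)
     else if i < n1 + n2 then pmf (poisson_pmf (exp y)) (nat \<lfloor>z $ i\<rfloor>)
     else if i < n1 + n2 + n3 then pmf (binomial_pmf (m (i - n1 - n2)) (exp y / (1 + exp y))) (nat \<lfloor>z $ i\<rfloor>)
     else (1 + (z $ i - y)\<^sup>2 / \<nu>) powr (- (\<nu> + 1) / 2))"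
  define Cf where "Cf = (\<lambda>i. if i < n1 then 1 / sqrt (2 * pi * \<sigma>2 i) * exp (- (z $ i)\<^sup>2 / (2 * \<sigma>2 i))
     else if i < n1 + n2 then 1 / fact (nat \<lfloor>z $ i\<rfloor>)
     else if i < n1 + n2 + n3 then real (m (i - n1 - n2) choose nat \<lfloor>z $ i\<rfloor>)
     else 1 :: real)"
  define t where "t = (\<lambda>l (y::real). (if n1 \<le> l \<and> l < n1 + n2 + n3 then \<alpha>\<xi> else 0) * y
                 - (if n1 + n2 \<le> l \<and> l < n1 + n2 + n3 then 2 * \<alpha>\<xi> else if N \<le> l then 1 / 2 else 0)
                   * blk_psi n1 n2 n3 \<nu> l y)"
  define t' where "t' = (\<lambda>l (y::real). (if l < n1 then z $ l / \<sigma>2 l else if l < n1 + n2 + n3 then z $ l + \<alpha>\<xi> else 0)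
                       * (y - (if n1 + n2 + n3 \<le> l \<and> l < N then z $ l else 0))
                 - (if l < n1 then 1 / (2 * \<sigma>2 l) else if l < n1 + n2 then 1
                    else if l < n1 + n2 + n3 then real (m (l - n1 - n2)) + 2 * \<alpha>\<xi> else (\<nu> + 1) / 2)
                   * blk_psi n1 n2 n3 \<nu> l (y - (if n1 + n2 + n3 \<le> l \<and> l < N then z $ l else 0)))"
  have coord: "lf i y * exp (t i y) = Cf i * exp (t' i y)" if i: "i < N" for i y
  proof -
    consider "i < n1" | "n1 \<le> i" "i < n1 + n2" | "n1 + n2 \<le> i" "i < n1 + n2 + n3" | "n1 + n2 + n3 \<le> i" by linarith
    thus ?thesis
    proof cases
      case 1
      thus ?thesis using lik_normal[of "\<sigma>2 i" y "z $ i"] \<sigma>2_pos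
        unfolding lf_def Cf_def t_def t'_def blk_psi_def by (simp add: N)
    next
      case 2
      have zi: "z $ i \<in> \<nat>" using z_pois 2 by (metis le_add_diff_inverse less_diff_conv2 add.commute)
      show ?thesis using lik_poisson[OF zi, of y \<alpha>\<xi>] 2
        unfolding lf_def Cf_def t_def t'_def blk_psi_def by (simp add: N)
    next
      case 3
      have zi: "z $ i \<in> \<nat>" "z $ i \<le> real (m (i - n1 - n2))" using z_binom[rule_format, of "i - n1 - n2"] 3 by auto
      show ?thesis using lik_binomial[OF zi, of y \<alpha>\<xi>] 3
        unfolding lf_def Cf_def t_def t'_def blk_psi_def by (simp add: N)
    next
      case 4
      show ?thesis using lik_student[OF \<nu>_pos, of "z $ i" y] 4 i
        unfolding lf_def Cf_def t_def t'_def blk_psi_def by (simp add: N)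
    qed
  qed
  have Cpos: "Cf i > 0" if i: "i < N" for i
  proof -
    have "z $ i \<le> real (m (i - n1 - n2))" if "n1 + n2 \<le> i" "i < n1 + n2 + n3"
      using z_binom[rule_format, of "i - n1 - n2"] that by auto
    moreover have "z $ i \<in> \<nat>" if "n1 + n2 \<le> i" "i < n1 + n2 + n3"
      using z_binom[rule_format, of "i - n1 - n2"] that by auto
    ultimately show ?thesis unfolding Cf_def using \<sigma>2_pos
      by (auto elim!: Nats_cases)
  qed
  define C where "C = (\<Prod>i<N. Cf i)"
  have "C > 0" unfolding C_def using Cpos by (intro prod_pos) auto
  moreover have "\<forall>Y :: real vec. (\<Prod>i<N. lf i (Y $ i)) * exp (\<Sum>l<N. t l (Y $ l)) = C * exp (\<Sum>l<N. t' l (Y $ l))"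
  proof
    fix Y :: "real vec"
    have "(\<Prod>i<N. lf i (Y $ i)) * exp (\<Sum>l<N. t l (Y $ l)) = (\<Prod>i<N. lf i (Y $ i) * exp (t i (Y $ i)))"
      by (simp add: exp_sum prod.distrib)
    also have "\<dots> = (\<Prod>i<N. Cf i * exp (t' i (Y $ i)))" using coord by (intro prod.cong) auto
    also have "\<dots> = C * exp (\<Sum>l<N. t' l (Y $ l))" unfolding C_def by (simp add: exp_sum prod.distrib)
    finally show "(\<Prod>i<N. lf i (Y $ i)) * exp (\<Sum>l<N. t l (Y $ l)) = C * exp (\<Sum>l<N. t' l (Y $ l))" .
  qed
  moreover have "(\<Prod>i<N. lf i (Y $ i)) =
    ((\<Prod>i<n1. normal_density (Y $ i) (sqrt (\<sigma>2 i)) (z $ i))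
         * (\<Prod>i<n2. pmf (poisson_pmf (exp (Y $ (n1 + i)))) (nat \<lfloor>z $ (n1 + i)\<rfloor>))
         * (\<Prod>i<n3. pmf (binomial_pmf (m i) (exp (Y $ (n1 + n2 + i)) / (1 + exp (Y $ (n1 + n2 + i)))))
                        (nat \<lfloor>z $ (n1 + n2 + i)\<rfloor>))
         * (\<Prod>i<n4. (1 + (z $ (n1 + n2 + n3 + i) - Y $ (n1 + n2 + n3 + i))\<^sup>2 / \<nu>) powr (- (\<nu> + 1) / 2)))"
    for Y :: "real vec"
    unfolding N prod_split_nat
    by (intro arg_cong2[where f = "(*)"] prod.cong refl; simp add: lf_def)
  ultimately show ?thesis unfolding t_def t'_def by (intro exI[of _ C]) simp
qed



lemma sp_sum: "dim_vec (u :: real vec) = n \<Longrightarrow> a \<bullet> u - (\<Sum>l<n. f l) = (\<Sum>l<n. a $ l * u $ l - f l)"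
  unfolding scalar_prod_def atLeast0LessThan by (simp add: sum_subtractf)

lemma smult_one_mult_vec: assumes v: "(v :: real vec) \<in> carrier_vec n" shows "(s \<cdot>\<^sub>m 1\<^sub>m n) *\<^sub>v v = s \<cdot>\<^sub>v v"
proof (rule eq_vecI)
  fix i assume "i < dim_vec (s \<cdot>\<^sub>v v)"
  hence i: "i < n" using v by simp
  have "(s \<cdot>\<^sub>v row (1\<^sub>m n) i) \<bullet> v = s * (row (1\<^sub>m n) i \<bullet> v)"
    using v i by (intro scalar_prod_smult_left) simp
  thus "((s \<cdot>\<^sub>m 1\<^sub>m n) *\<^sub>v v) $ i = (s \<cdot>\<^sub>v v) $ i" using i v by simp
qed (insert v, simp)

lemma Dinv_mult_vec:
  assumes ib: "ib \<in> carrier_mat p p" and ie: "ie \<in> carrier_mat r r"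
  and a: "a \<in> carrier_vec N" and b: "b \<in> carrier_vec p" and c: "c \<in> carrier_vec r" and d: "d \<in> carrier_vec N"
  shows "blkdiag (blkdiag (blkdiag (1\<^sub>m N) ib) ie) (s \<cdot>\<^sub>m 1\<^sub>m N) *\<^sub>v (((a @\<^sub>v b) @\<^sub>v c) @\<^sub>v d)
    = ((a @\<^sub>v (ib *\<^sub>v b)) @\<^sub>v (ie *\<^sub>v c)) @\<^sub>v (s \<cdot>\<^sub>v d)"
proof -
  have c1: "blkdiag (1\<^sub>m N) ib \<in> carrier_mat (N + p) (N + p)" using ib by simp
  have c2: "blkdiag (blkdiag (1\<^sub>m N) ib) ie \<in> carrier_mat (N + p + r) (N + p + r)" using c1 ie by simp
  show ?thesis
    apply (subst blkdiag_mult_vec[OF c2 smult_carrier_mat[OF one_carrier_mat]])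
      apply (insert a b c d, simp, simp)
    apply (subst blkdiag_mult_vec[OF c1 ie])
      apply (simp, simp)
    apply (subst blkdiag_mult_vec[OF one_carrier_mat ib a b])
    using a d by (simp add: smult_one_mult_vec)
qed

lemma A_mult_vec:
  assumes X: "X \<in> carrier_mat N p" and G: "G \<in> carrier_mat N r"
  and a: "a \<in> carrier_vec N" and b: "b \<in> carrier_vec p" and c: "c \<in> carrier_vec r"
  shows "vcat (hcat (hcat (1\<^sub>m N) X) G) (hcat (hcat (s \<cdot>\<^sub>m 1\<^sub>m N) (0\<^sub>m N p)) (0\<^sub>m N r)) *\<^sub>v ((a @\<^sub>v b) @\<^sub>v c)
     = (a + X *\<^sub>v b + G *\<^sub>v c) @\<^sub>v (s \<cdot>\<^sub>v a)"
proof -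
  have c1: "hcat (hcat (1\<^sub>m N) X) G \<in> carrier_mat N (N + p + r)" using X G by simp
  have c2: "hcat (hcat (s \<cdot>\<^sub>m 1\<^sub>m N) (0\<^sub>m N p)) (0\<^sub>m N r) \<in> carrier_mat N (N + p + r)" by simp
  have ab: "a @\<^sub>v b \<in> carrier_vec (N + p)" using a b by simp
  have e1: "hcat (hcat (1\<^sub>m N) X) G *\<^sub>v ((a @\<^sub>v b) @\<^sub>v c) = a + X *\<^sub>v b + G *\<^sub>v c"
    using X G a b c ab by (simp add: hcat_mult_vec[of _ N "N + p" _ r] hcat_mult_vec[of _ N N _ p])
  have e2: "hcat (hcat (s \<cdot>\<^sub>m 1\<^sub>m N) (0\<^sub>m N p)) (0\<^sub>m N r) *\<^sub>v ((a @\<^sub>v b) @\<^sub>v c) = s \<cdot>\<^sub>v a"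
    using a b c ab by (simp add: hcat_mult_vec[of _ N "N + p" _ r] hcat_mult_vec[of _ N N _ p] smult_one_mult_vec)
  show ?thesis by (subst vcat_mult_vec[OF c1 c2]) (simp add: e1 e2)
qed


theorem theorem6:
  fixes n1 n2 n3 n4 p r :: nat
    and z :: "real vec" and \<sigma>2 :: "nat \<Rightarrow> real" and m :: "nat \<Rightarrow> nat" and \<nu> :: real
    and X G Q :: "real mat"
    and \<Theta> :: "'a measure" and \<pi> :: "'a \<Rightarrow> real"
    and D\<beta> D\<eta> :: "'a \<Rightarrow> real mat"
    and \<alpha>\<beta> \<kappa>\<beta> \<alpha>\<eta> \<kappa>\<eta> :: "real vec" and \<psi>\<beta> \<psi>\<eta> :: "nat \<Rightarrow> real \<Rightarrow> real"
    and \<alpha>\<xi> \<sigma>\<xi>2 \<omega> :: real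
    and N M H E g Dinv Dm A \<alpha>\<xi>v \<kappa>\<xi>v \<psi>\<xi> lik unnorm post c \<alpha>M \<kappa>M \<psi>M VM \<mu>M gcm R PR
  assumes "N = n1 + n2 + n3 + n4"
    and "M = 2 * N + p + r"
    and "H = vcat (vcat (vcat (hcat (hcat (1\<^sub>m N) X) G)
                             (hcat (hcat (0\<^sub>m p N) (1\<^sub>m p)) (0\<^sub>m p r)))
                       (hcat (hcat (0\<^sub>m r N) (0\<^sub>m r p)) (1\<^sub>m r)))
                 (hcat (hcat (1\<^sub>m N) (0\<^sub>m N p)) (0\<^sub>m N r))"
    and "E = hcat (1\<^sub>m N) (0\<^sub>m N (N + p + r))"
    and "g = (\<lambda>q. mtrace (E * Q * outer q * Q\<^sup>T * E\<^sup>T))"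
    and "Dinv = (\<lambda>\<theta>. blkdiag (blkdiag (blkdiag (1\<^sub>m N) (minv (D\<beta> \<theta>))) (minv (D\<eta> \<theta>)))
                              ((1 / \<sigma>\<xi>2) \<cdot>\<^sub>m 1\<^sub>m N))"
    and "Dm = (\<lambda>\<theta>. minv (Dinv \<theta>))"
    and "A = vcat (hcat (hcat (1\<^sub>m N) X) G)
                 (hcat (hcat ((1 / \<sigma>\<xi>2) \<cdot>\<^sub>m 1\<^sub>m N) (0\<^sub>m N p)) (0\<^sub>m N r))"
    and "\<alpha>\<xi>v = Matrix.vec (2 * N) (\<lambda>l. if n1 \<le> l \<and> l < n1 + n2 + n3 then \<alpha>\<xi> else 0)"
    and "\<kappa>\<xi>v = Matrix.vec (2 * N) (\<lambda>l. if n1 + n2 \<le> l \<and> l < n1 + n2 + n3 then 2 * \<alpha>\<xi>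
                                        else if N \<le> l then 1 / 2 else 0)"
    and "\<psi>\<xi> = (\<lambda>l. if l < N then blk_psi n1 n2 n3 \<nu> l else psi1)"
    and "lik = (\<lambda>y.
           (\<Prod>i<n1. normal_density (y $ i) (sqrt (\<sigma>2 i)) (z $ i))
         * (\<Prod>i<n2. pmf (poisson_pmf (exp (y $ (n1 + i)))) (nat \<lfloor>z $ (n1 + i)\<rfloor>))
         * (\<Prod>i<n3. pmf (binomial_pmf (m i) (exp (y $ (n1 + n2 + i)) / (1 + exp (y $ (n1 + n2 + i)))))
                        (nat \<lfloor>z $ (n1 + n2 + i)\<rfloor>))
         * (\<Prod>i<n4. (1 + (z $ (n1 + n2 + n3 + i) - y $ (n1 + n2 + n3 + i))\<^sup>2 / \<nu>) powr (- (\<nu> + 1) / 2)))"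
    and "unnorm = (\<lambda>x.
           (let \<zeta> = vec_first x (N + p + r); q = vec_last x N;
                \<xi> = vblock \<zeta> 0 N; \<beta> = vblock \<zeta> N p; \<eta> = vblock \<zeta> (N + p) r
            in \<integral>\<theta>. (let loc = - (Dinv \<theta> *\<^sub>v (Q *\<^sub>v q));
                         \<mu>D = vblock loc 0 N; \<mu>\<beta> = vblock loc N p;
                         \<mu>\<eta> = vblock loc (N + p) r; \<mu>\<xi> = vblock loc (N + p + r) N;
                         y = X *\<^sub>v \<beta> + G *\<^sub>v \<eta> + \<xi> - \<mu>D;
                         u\<xi> = A *\<^sub>v \<zeta> - (\<mu>D @\<^sub>v \<mu>\<xi>);
                         u\<beta> = minv (D\<beta> \<theta>) *\<^sub>v \<beta> - \<mu>\<beta>;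
                         u\<eta> = minv (D\<eta> \<theta>) *\<^sub>v \<eta> - \<mu>\<eta>
                     in \<pi> \<theta> * lik y
                        * exp (scalar_prod \<alpha>\<xi>v u\<xi> - (\<Sum>l<2 * N. \<kappa>\<xi>v $ l * \<psi>\<xi> l (u\<xi> $ l)))
                        * (1 / \<bar>det (D\<beta> \<theta>)\<bar>)
                        * exp (scalar_prod \<alpha>\<beta> u\<beta> - (\<Sum>j<p. \<kappa>\<beta> $ j * \<psi>\<beta> j (u\<beta> $ j)))
                        * (1 / \<bar>det (D\<eta> \<theta>)\<bar>)
                        * exp (scalar_prod \<alpha>\<eta> u\<eta> - (\<Sum>j<r. \<kappa>\<eta> $ j * \<psi>\<eta> j (u\<eta> $ j)))
                        * (if g q \<le> \<omega> then 1 else 0)) \<partial>\<Theta>))"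
    and "post = (\<lambda>x. unnorm x / vint M unnorm)"
    and "c = Matrix.vec M (\<lambda>i. if n1 + n2 + n3 \<le> i \<and> i < N then z $ i else 0)"
    and "\<alpha>M = Matrix.vec M (\<lambda>i. if i < n1 then z $ i / \<sigma>2 i
                              else if i < n1 + n2 + n3 then z $ i + \<alpha>\<xi>
                              else if i < N then 0
                              else if i < N + p then \<alpha>\<beta> $ (i - N)
                              else if i < N + p + r then \<alpha>\<eta> $ (i - N - p)
                              else 0)"
    and "\<kappa>M = Matrix.vec M (\<lambda>i. if i < n1 then 1 / (2 * \<sigma>2 i)
                              else if i < n1 + n2 then 1
                              else if i < n1 + n2 + n3 then real (m (i - n1 - n2)) + 2 * \<alpha>\<xi>
                              else if i < N then (\<nu> + 1) / 2
                              else if i < N + p then \<kappa>\<beta> $ (i - N)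
                              else if i < N + p + r then \<kappa>\<eta> $ (i - N - p)
                              else 1 / 2)"
    and "\<psi>M = (\<lambda>i. if i < N then blk_psi n1 n2 n3 \<nu> i
                 else if i < N + p then \<psi>\<beta> (i - N)
                 else if i < N + p + r then \<psi>\<eta> (i - N - p)
                 else psi1)"
    and "VM = minv (hcat H Q)"
    and "\<mu>M = VM *\<^sub>v c"
    and "gcm = gcm_density \<Theta> \<pi> \<alpha>M \<kappa>M \<mu>M VM Dm \<psi>M"
    and "R = {x. g (vec_last x N) \<le> \<omega>}"
    and "PR = vint M (\<lambda>x. indicator R x * gcm x)"
    and z: "z \<in> carrier_vec N"
    and \<sigma>2_pos: "\<forall>i<n1. \<sigma>2 i > 0"
    and z_pois: "\<forall>i<n2. z $ (n1 + i) \<in> \<nat>"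
    and z_binom: "\<forall>i<n3. z $ (n1 + n2 + i) \<in> \<nat> \<and> z $ (n1 + n2 + i) \<le> real (m i)"
    and \<nu>_pos: "\<nu> > 0"
    and X: "X \<in> carrier_mat N p" and G: "G \<in> carrier_mat N r"
    and \<pi>_meas: "\<pi> \<in> borel_measurable \<Theta>"
    and \<pi>_nonneg: "\<forall>\<theta>\<in>space \<Theta>. \<pi> \<theta> \<ge> 0"
    and \<pi>_proper: "integral\<^sup>L \<Theta> \<pi> = 1"
    and D\<beta>: "\<forall>\<theta>\<in>space \<Theta>. D\<beta> \<theta> \<in> carrier_mat p p \<and> invertible_mat (D\<beta> \<theta>)"
    and D\<eta>: "\<forall>\<theta>\<in>space \<Theta>. D\<eta> \<theta> \<in> carrier_mat r r \<and> invertible_mat (D\<eta> \<theta>)"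
    and \<alpha>\<beta>: "\<alpha>\<beta> \<in> carrier_vec p" and \<kappa>\<beta>: "\<kappa>\<beta> \<in> carrier_vec p"
    and \<alpha>\<eta>: "\<alpha>\<eta> \<in> carrier_vec r" and \<kappa>\<eta>: "\<kappa>\<eta> \<in> carrier_vec r"
    and DY\<beta>: "\<forall>j<p. integrable lborel (\<lambda>w. exp (\<alpha>\<beta> $ j * w - \<kappa>\<beta> $ j * \<psi>\<beta> j w))"
    and DY\<eta>: "\<forall>j<r. integrable lborel (\<lambda>w. exp (\<alpha>\<eta> $ j * w - \<kappa>\<eta> $ j * \<psi>\<eta> j w))"
    and \<alpha>\<xi>_pos: "\<alpha>\<xi> > 0" and \<sigma>\<xi>2_pos: "\<sigma>\<xi>2 > 0" and \<omega>_pos: "\<omega> > 0"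
    and Q: "Q \<in> carrier_mat M N"
    and Q_orth: "Q\<^sup>T * Q = 1\<^sub>m N"
    and HQ: "H\<^sup>T * Q = 0\<^sub>m (N + p + r) N"
    and QQ: "Q * Q\<^sup>T = 1\<^sub>m M - H * minv (H\<^sup>T * H) * H\<^sup>T"
    and PR_pos: "PR > 0"
  shows "(\<forall>x\<in>carrier_vec M. post x = gcm x * indicator R x / PR)
       \<and> (\<forall>w\<in>carrier_vec M.
            let \<zeta>rep = minv (H\<^sup>T * H) *\<^sub>v (H\<^sup>T *\<^sub>v w);
                qrep = Q\<^sup>T *\<^sub>v w;
                yrep = E *\<^sub>v w;
                yhat = E *\<^sub>v (H *\<^sub>v \<zeta>rep)
            in g qrep = scalar_prod (yrep - yhat) (yrep - yhat))"
  proof -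
  let ?K = "N + p + r"
  note Ndef = assms(1) and Mdef = assms(2) and Hdef = assms(3) and Edef = assms(4) and gdef = assms(5)
    and Dinvdef = assms(6) and Dmdef = assms(7) and Adef = assms(8) and axvdef = assms(9) and kxvdef = assms(10)
    and pxdef = assms(11) and likdef = assms(12) and undef = assms(13) and postdef = assms(14) and cdef = assms(15)
    and aMdef = assms(16) and kMdef = assms(17) and pMdef = assms(18) and VMdef = assms(19) and muMdef = assms(20)
    and gcmdef = assms(21) and Rdef = assms(22) and PRdef = assms(23)
  have MK: "M = N + p + r + N" using Mdef by simp
  have nle: "n1 \<le> N" "n1 + n2 \<le> N" "n1 + n2 + n3 \<le> N" using Ndef by auto
  have Hc: "H \<in> carrier_mat M ?K" using H_carrier[OF X G Hdef] MK by simp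
  note hQ = hQ_inv[OF X G Hdef Mdef Q QQ]
  have P2: "\<forall>w\<in>carrier_vec M.
            let \<zeta>rep = minv (H\<^sup>T * H) *\<^sub>v (H\<^sup>T *\<^sub>v w);
                qrep = Q\<^sup>T *\<^sub>v w;
                yrep = E *\<^sub>v w;
                yhat = E *\<^sub>v (H *\<^sub>v \<zeta>rep)
            in g qrep = scalar_prod (yrep - yhat) (yrep - yhat)"
  proof
    fix w :: "real vec" assume w: "w \<in> carrier_vec M"
    show "let \<zeta>rep = minv (H\<^sup>T * H) *\<^sub>v (H\<^sup>T *\<^sub>v w);
                qrep = Q\<^sup>T *\<^sub>v w;
                yrep = E *\<^sub>v w;
                yhat = E *\<^sub>v (H *\<^sub>v \<zeta>rep)
            in g qrep = scalar_prod (yrep - yhat) (yrep - yhat)"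
      unfolding Let_def gdef using part2[OF X G Hdef Mdef Edef Q QQ w] by simp
  qed

  define T where "T x \<theta> = Dinv \<theta> *\<^sub>v (hcat H Q *\<^sub>v x - c)" for x \<theta>
  define Eg where "Eg x \<theta> = (\<Sum>l<M. \<alpha>M $ l * T x \<theta> $ l - \<kappa>M $ l * \<psi>M l (T x \<theta> $ l))" for x \<theta>
  define J where "J x \<theta> = \<pi> \<theta> * exp (Eg x \<theta>) / (\<bar>det (D\<beta> \<theta>)\<bar> * \<bar>det (D\<eta> \<theta>)\<bar>)" for x \<theta>
  define JJ where "JJ x = (\<integral>\<theta>. J x \<theta> \<partial>\<Theta>)" for x
  define P where "P = (\<Prod>l<M. DY_const (\<alpha>M $ l) (\<kappa>M $ l) (\<psi>M l))"
  define K1 where "K1 = P / (\<sigma>\<xi>2 ^ N * \<bar>det VM\<bar>)"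
  have DF: "minv (minv (Dinv \<theta>)) = Dinv \<theta> \<and> det (minv (Dinv \<theta>)) = det (D\<beta> \<theta>) * det (D\<eta> \<theta>) * \<sigma>\<xi>2 ^ N
     \<and> Dinv \<theta> \<in> carrier_mat M M" if th: "\<theta> \<in> space \<Theta>" for \<theta>
  proof -
    have Db: "D\<beta> \<theta> \<in> carrier_mat p p" "invertible_mat (D\<beta> \<theta>)" using D\<beta> th by auto
    have De: "D\<eta> \<theta> \<in> carrier_mat r r" "invertible_mat (D\<eta> \<theta>)" using D\<eta> th by auto
    have dd: "Dinv \<theta> = blkdiag (blkdiag (blkdiag (1\<^sub>m N) (minv (D\<beta> \<theta>))) (minv (D\<eta> \<theta>))) ((1 / \<sigma>\<xi>2) \<cdot>\<^sub>m 1\<^sub>m N)"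
      using Dinvdef by simp
    note F = Dinv_facts[OF Db De \<sigma>\<xi>2_pos dd]
    show ?thesis using F MK by simp
  qed
  have Tc: "T x \<theta> \<in> carrier_vec M" if th: "\<theta> \<in> space \<Theta>" for x \<theta>
  proof -
    have "dim_row (Dinv \<theta>) = M" using DF[OF th] by auto
    thus ?thesis unfolding T_def by (intro carrier_vecI) simp
  qed
  have gcmx: "gcm x = K1 * JJ x" if x: "x \<in> carrier_vec M" for x
  proof -
    have "gcm x = (\<integral>\<theta>. K1 * J x \<theta> \<partial>\<Theta>)"
      unfolding gcmdef gcm_density_def
    proof (rule Bochner_Integration.integral_cong[OF refl], goal_cases)
      case (1 \<theta>)
      have Dmi: "minv (Dm \<theta>) = Dinv \<theta>" using DF[OF 1] Dmdef by simp
      have dDm: "det (Dm \<theta>) = det (D\<beta> \<theta>) * det (D\<eta> \<theta>) * \<sigma>\<xi>2 ^ N" using DF[OF 1] Dmdef by simp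
      have hc: "hcat H Q \<in> carrier_mat M M" and VMc: "VM \<in> carrier_mat M M" and hV: "hcat H Q * VM = 1\<^sub>m M"
        and mVM: "minv VM = hcat H Q" using hQ VMdef by auto
      have cc: "c \<in> carrier_vec M" using cdef by simp
      have tt: "minv VM *\<^sub>v (x - \<mu>M) = hcat H Q *\<^sub>v x - c"
      proof -
        have "minv VM *\<^sub>v (x - \<mu>M) = hcat H Q *\<^sub>v x - hcat H Q *\<^sub>v (VM *\<^sub>v c)"
          unfolding mVM muMdef using hc VMc x cc by (simp add: mult_minus_distrib_mat_vec[OF hc])
        also have "hcat H Q *\<^sub>v (VM *\<^sub>v c) = c" using hc VMc cc hV
          by (metis assoc_mult_mat_vec one_mult_mat_vec)
        finally show ?thesis .
      qed
      have dima: "dim_vec \<alpha>M = M" using aMdef by simp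
      have ex: "scalar_prod \<alpha>M (T x \<theta>) - (\<Sum>l<M. \<kappa>M $ l * \<psi>M l (T x \<theta> $ l)) = Eg x \<theta>"
        unfolding Eg_def using sp_sum Tc[OF 1] by simp
      have sg: "\<bar>\<sigma>\<xi>2 ^ N\<bar> = \<sigma>\<xi>2 ^ N" using \<sigma>\<xi>2_pos by simp
      show ?case unfolding Let_def Dmi tt T_def[symmetric] dima ex P_def[symmetric] dDm
        by (simp add: K1_def J_def abs_mult sg divide_inverse inverse_mult_distrib ac_simps)
    qed
    also have "\<dots> = K1 * JJ x" unfolding JJ_def by simp
    finally show ?thesis .
  qed

  define S1 where "S1 Y = (\<Sum>l<N. (if n1 \<le> l \<and> l < n1 + n2 + n3 then \<alpha>\<xi> else 0) * Y $ l
                 - (if n1 + n2 \<le> l \<and> l < n1 + n2 + n3 then 2 * \<alpha>\<xi> else if N \<le> l then 1 / 2 else 0)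
                   * blk_psi n1 n2 n3 \<nu> l (Y $ l))" for Y :: "real vec"
  define S1' where "S1' Y = (\<Sum>l<N. (if l < n1 then z $ l / \<sigma>2 l else if l < n1 + n2 + n3 then z $ l + \<alpha>\<xi> else 0)
                       * (Y $ l - (if n1 + n2 + n3 \<le> l \<and> l < N then z $ l else 0))
                 - (if l < n1 then 1 / (2 * \<sigma>2 l) else if l < n1 + n2 then 1
                    else if l < n1 + n2 + n3 then real (m (l - n1 - n2)) + 2 * \<alpha>\<xi> else (\<nu> + 1) / 2)
                   * blk_psi n1 n2 n3 \<nu> l (Y $ l - (if n1 + n2 + n3 \<le> l \<and> l < N then z $ l else 0)))" for Y :: "real vec"
  have "\<exists>C>0. \<forall>Y. lik Y * exp (S1 Y) = C * exp (S1' Y)"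
    unfolding S1_def S1'_def likdef using lik_block[OF Ndef \<sigma>2_pos z_pois z_binom \<nu>_pos, where \<alpha>\<xi> = \<alpha>\<xi>] by simp
  then obtain C where Cpos: "C > 0" and Clik: "\<And>Y. lik Y * exp (S1 Y) = C * exp (S1' Y)" by blast
  have unx: "unnorm x = C * indicator R x * JJ x" if x: "x \<in> carrier_vec M" for x
  proof -
    define \<zeta> where "\<zeta> = vec_first x ?K"
    define q where "q = vec_last x N"
    define \<xi> where "\<xi> = vblock \<zeta> 0 N"
    define \<beta> where "\<beta> = vblock \<zeta> N p"
    define \<eta> where "\<eta> = vblock \<zeta> (N + p) r"
    define w where "w = Q *\<^sub>v q"
    define w1 where "w1 = vblock w 0 N"
    define w2 where "w2 = vblock w N p"
    define w3 where "w3 = vblock w (N + p) r"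
    define w4 where "w4 = vblock w (N + p + r) N"
    define Y where "Y = \<xi> + X *\<^sub>v \<beta> + G *\<^sub>v \<eta> + w1"
    define c1 where "c1 = Matrix.vec N (\<lambda>i. if n1 + n2 + n3 \<le> i then z $ i else 0)"
    define T4 where "T4 = (1 / \<sigma>\<xi>2) \<cdot>\<^sub>v (\<xi> + w4)"
    define S4 where "S4 = (\<Sum>j<N. 0 * T4 $ j - 1 / 2 * psi1 (T4 $ j))"
    have xK: "x \<in> carrier_vec (?K + N)" using x MK by simp
    have \<zeta>c: "\<zeta> \<in> carrier_vec ?K" and qc: "q \<in> carrier_vec N" unfolding \<zeta>_def q_def by auto
    have \<xi>c: "\<xi> \<in> carrier_vec N" and \<beta>c: "\<beta> \<in> carrier_vec p" and \<eta>c: "\<eta> \<in> carrier_vec r"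
      unfolding \<xi>_def \<beta>_def \<eta>_def by auto
    have wc: "w \<in> carrier_vec (N + p + r + N)" unfolding w_def using Q qc MK by simp
    have w1c: "w1 \<in> carrier_vec N" and w2c: "w2 \<in> carrier_vec p" and w3c: "w3 \<in> carrier_vec r"
      and w4c: "w4 \<in> carrier_vec N" unfolding w1_def w2_def w3_def w4_def by auto
    have Yc: "Y \<in> carrier_vec N" unfolding Y_def using \<xi>c \<beta>c \<eta>c w1c X G by simp
    have c1c: "c1 \<in> carrier_vec N" unfolding c1_def by simp
    have T4c: "T4 \<in> carrier_vec N" unfolding T4_def using \<xi>c w4c by simp
    have xs: "x = \<zeta> @\<^sub>v q" unfolding \<zeta>_def q_def using vec_first_last_append[OF xK] by simp
    have zs: "\<zeta> = (\<xi> @\<^sub>v \<beta>) @\<^sub>v \<eta>" unfolding \<xi>_def \<beta>_def \<eta>_def by (rule vblock_split3[OF \<zeta>c])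
    have ws: "w = ((w1 @\<^sub>v w2) @\<^sub>v w3) @\<^sub>v w4" unfolding w1_def w2_def w3_def w4_def by (rule vblock_split4[OF wc])
    have ind: "indicator R x = (if g q \<le> \<omega> then 1 else 0)" unfolding Rdef q_def indicator_def by simp
    have "unnorm x = (\<integral>\<theta>. (C * indicator R x) * J x \<theta> \<partial>\<Theta>)"
      unfolding undef Let_def \<zeta>_def[symmetric] q_def[symmetric] \<xi>_def[symmetric] \<beta>_def[symmetric] \<eta>_def[symmetric]
    proof (rule Bochner_Integration.integral_cong[OF refl], goal_cases)
      case (1 \<theta>)
      define ib where "ib = minv (D\<beta> \<theta>)"
      define ie where "ie = minv (D\<eta> \<theta>)"
      have ibc: "ib \<in> carrier_mat p p" unfolding ib_def using minv_invertible D\<beta> 1 by blast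
      have iec: "ie \<in> carrier_mat r r" unfolding ie_def using minv_invertible D\<eta> 1 by blast
      define T2 where "T2 = ib *\<^sub>v (\<beta> + w2)"
      define T3 where "T3 = ie *\<^sub>v (\<eta> + w3)"
      have T2c: "T2 \<in> carrier_vec p" unfolding T2_def using ibc by (intro carrier_vecI) simp
      have T3c: "T3 \<in> carrier_vec r" unfolding T3_def using iec by (intro carrier_vecI) simp
      have Dd: "Dinv \<theta> = blkdiag (blkdiag (blkdiag (1\<^sub>m N) ib) ie) ((1 / \<sigma>\<xi>2) \<cdot>\<^sub>m 1\<^sub>m N)"
        using Dinvdef unfolding ib_def ie_def by simp
      have Dw: "Dinv \<theta> *\<^sub>v (Q *\<^sub>v q) = ((w1 @\<^sub>v (ib *\<^sub>v w2)) @\<^sub>v (ie *\<^sub>v w3)) @\<^sub>v ((1 / \<sigma>\<xi>2) \<cdot>\<^sub>v w4)"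
        unfolding w_def[symmetric] ws Dd by (rule Dinv_mult_vec[OF ibc iec w1c w2c w3c w4c])
      have L: "- (Dinv \<theta> *\<^sub>v (Q *\<^sub>v q)) = ((- w1 @\<^sub>v - (ib *\<^sub>v w2)) @\<^sub>v - (ie *\<^sub>v w3)) @\<^sub>v - ((1 / \<sigma>\<xi>2) \<cdot>\<^sub>v w4)"
        unfolding Dw append_vec_uminus ..
      have c4: "- w1 \<in> carrier_vec N" "- (ib *\<^sub>v w2) \<in> carrier_vec p" "- (ie *\<^sub>v w3) \<in> carrier_vec r"
        "- ((1 / \<sigma>\<xi>2) \<cdot>\<^sub>v w4) \<in> carrier_vec N" using w1c w2c w3c w4c ibc iec by auto
      note va = vblock_app4[OF c4]
      have muD: "vblock (- (Dinv \<theta> *\<^sub>v (Q *\<^sub>v q))) 0 N = - w1" unfolding L by (rule va(1))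
      have mub: "vblock (- (Dinv \<theta> *\<^sub>v (Q *\<^sub>v q))) N p = - (ib *\<^sub>v w2)" unfolding L by (rule va(2))
      have mue: "vblock (- (Dinv \<theta> *\<^sub>v (Q *\<^sub>v q))) (N + p) r = - (ie *\<^sub>v w3)" unfolding L by (rule va(3))
      have mux: "vblock (- (Dinv \<theta> *\<^sub>v (Q *\<^sub>v q))) (N + p + r) N = - ((1 / \<sigma>\<xi>2) \<cdot>\<^sub>v w4)" unfolding L by (rule va(4))
      have fy: "X *\<^sub>v \<beta> + G *\<^sub>v \<eta> + \<xi> - - w1 = Y"
        unfolding Y_def by (rule eq_vecI, insert X G \<xi>c \<beta>c \<eta>c w1c, auto)
      have fA: "A *\<^sub>v \<zeta> - (- w1 @\<^sub>v - ((1 / \<sigma>\<xi>2) \<cdot>\<^sub>v w4)) = Y @\<^sub>v T4"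
      proof -
        have "A *\<^sub>v \<zeta> = (\<xi> + X *\<^sub>v \<beta> + G *\<^sub>v \<eta>) @\<^sub>v ((1 / \<sigma>\<xi>2) \<cdot>\<^sub>v \<xi>)"
          unfolding Adef zs by (rule A_mult_vec[OF X G \<xi>c \<beta>c \<eta>c])
        thus ?thesis unfolding Y_def T4_def
          by (intro eq_vecI, insert X G \<xi>c \<beta>c \<eta>c w1c w4c, auto simp: algebra_simps)
      qed
      have fb: "ib *\<^sub>v \<beta> - - (ib *\<^sub>v w2) = T2" unfolding T2_def mult_add_distrib_mat_vec[OF ibc \<beta>c w2c]
        by (rule eq_vecI, insert ibc \<beta>c w2c, auto)
      have fe: "ie *\<^sub>v \<eta> - - (ie *\<^sub>v w3) = T3" unfolding T3_def mult_add_distrib_mat_vec[OF iec \<eta>c w3c]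
        by (rule eq_vecI, insert iec \<eta>c w3c, auto)
      have Tx: "T x \<theta> = (((Y - c1) @\<^sub>v T2) @\<^sub>v T3) @\<^sub>v T4"
      proof -
        have hx: "hcat H Q *\<^sub>v x = H *\<^sub>v \<zeta> + Q *\<^sub>v q" unfolding xs by (rule hcat_mult_vec[OF Hc Q \<zeta>c qc])
        have Hz: "H *\<^sub>v \<zeta> = (((\<xi> + X *\<^sub>v \<beta> + G *\<^sub>v \<eta>) @\<^sub>v \<beta>) @\<^sub>v \<eta>) @\<^sub>v \<xi>"
          unfolding zs by (rule H_mult_vec[OF X G Hdef \<xi>c \<beta>c \<eta>c])
        have cs: "c = ((c1 @\<^sub>v 0\<^sub>v p) @\<^sub>v 0\<^sub>v r) @\<^sub>v 0\<^sub>v N"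
          by (rule eq_vecI, auto simp: cdef c1_def MK)
        have cmb: "hcat H Q *\<^sub>v x - c = (((Y - c1) @\<^sub>v (\<beta> + w2)) @\<^sub>v (\<eta> + w3)) @\<^sub>v (\<xi> + w4)"
          unfolding hx Hz w_def[symmetric] ws cs Y_def
          by (rule eq_vecI, insert X G \<xi>c \<beta>c \<eta>c w1c w2c w3c w4c c1c, auto)
        have a1: "Y - c1 \<in> carrier_vec N" using Yc c1c by simp
        have a2: "\<beta> + w2 \<in> carrier_vec p" using \<beta>c w2c by simp
        have a3: "\<eta> + w3 \<in> carrier_vec r" using \<eta>c w3c by simp
        have a4: "\<xi> + w4 \<in> carrier_vec N" using \<xi>c w4c by simp
        show ?thesis unfolding T_def cmb Dd Dinv_mult_vec[OF ibc iec a1 a2 a3 a4] T2_def T3_def T4_def ..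
      qed
      have dY: "dim_vec Y = N" and dT4: "dim_vec T4 = N" and dc1: "dim_vec c1 = N"
        and dT2: "dim_vec T2 = p" and dT3: "dim_vec T3 = r" using Yc T4c c1c T2c T3c by auto
      have e1: "scalar_prod \<alpha>\<xi>v (Y @\<^sub>v T4) - (\<Sum>l<2 * N. \<kappa>\<xi>v $ l * \<psi>\<xi> l ((Y @\<^sub>v T4) $ l)) = S1 Y + S4"
      proof -
        have d: "dim_vec (Y @\<^sub>v T4) = 2 * N" using dY dT4 by simp
        have "scalar_prod \<alpha>\<xi>v (Y @\<^sub>v T4) - (\<Sum>l<2 * N. \<kappa>\<xi>v $ l * \<psi>\<xi> l ((Y @\<^sub>v T4) $ l))
           = (\<Sum>l<N + N. \<alpha>\<xi>v $ l * (Y @\<^sub>v T4) $ l - \<kappa>\<xi>v $ l * \<psi>\<xi> l ((Y @\<^sub>v T4) $ l))"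
          using sp_sum[OF d] by (simp add: mult_2)
        also have "\<dots> = S1 Y + S4" unfolding sum_split_nat S1_def S4_def
          by (intro arg_cong2[where f="(+)"] sum.cong refl) (auto simp: axvdef kxvdef pxdef Ndef dY dT4)
        finally show ?thesis .
      qed
      have e2: "Eg x \<theta> = S1' Y + (scalar_prod \<alpha>\<beta> T2 - (\<Sum>j<p. \<kappa>\<beta> $ j * \<psi>\<beta> j (T2 $ j)))
                   + (scalar_prod \<alpha>\<eta> T3 - (\<Sum>j<r. \<kappa>\<eta> $ j * \<psi>\<eta> j (T3 $ j))) + S4"
      proof -
        have sb: "scalar_prod \<alpha>\<beta> T2 - (\<Sum>j<p. \<kappa>\<beta> $ j * \<psi>\<beta> j (T2 $ j))
            = (\<Sum>j<p. \<alpha>\<beta> $ j * T2 $ j - \<kappa>\<beta> $ j * \<psi>\<beta> j (T2 $ j))" by (rule sp_sum[OF dT2])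
        have se: "scalar_prod \<alpha>\<eta> T3 - (\<Sum>j<r. \<kappa>\<eta> $ j * \<psi>\<eta> j (T3 $ j))
            = (\<Sum>j<r. \<alpha>\<eta> $ j * T3 $ j - \<kappa>\<eta> $ j * \<psi>\<eta> j (T3 $ j))" by (rule sp_sum[OF dT3])
        show ?thesis unfolding Eg_def Tx sb se MK sum_split_nat S1'_def S4_def
          by (intro arg_cong2[where f="(+)"] sum.cong refl) (insert nle, auto simp: aMdef kMdef pMdef MK dY dT4 dc1 dT2 dT3 c1_def)
      qed
      show ?case
        unfolding muD mub mue mux fy fA fb fe e1 J_def e2 ib_def[symmetric] ie_def[symmetric]
        unfolding ind using Clik[of Y] by (simp add: exp_add)
    qed
    also have "\<dots> = C * indicator R x * JJ x" unfolding JJ_def by simp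
    finally show ?thesis .
  qed


  define V where "V = vint M (\<lambda>y. indicator R y * JJ y)"
  have vu: "vint M unnorm = C * V"
  proof -
    have "vint M unnorm = (\<integral>x. C * (indicator R (Matrix.vec M x) * JJ (Matrix.vec M x)) \<partial>(PiM {..<M} (\<lambda>_. lborel)))"
      unfolding vint_def
      by (rule Bochner_Integration.integral_cong[OF refl]) (simp add: unx mult.assoc)
    thus ?thesis unfolding V_def vint_def by simp
  qed
  have vp: "PR = K1 * V"
  proof -
    have "PR = (\<integral>x. K1 * (indicator R (Matrix.vec M x) * JJ (Matrix.vec M x)) \<partial>(PiM {..<M} (\<lambda>_. lborel)))"
      unfolding PRdef vint_def
      by (rule Bochner_Integration.integral_cong[OF refl]) (simp add: gcmx ac_simps)
    thus ?thesis unfolding V_def vint_def by simp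
  qed
  have K1V: "K1 \<noteq> 0" "V \<noteq> 0" using PR_pos vp by auto
  show ?thesis
  proof (intro conjI)
    show "\<forall>x\<in>carrier_vec M. post x = gcm x * indicator R x / PR"
    proof
      fix x :: "real vec" assume x: "x \<in> carrier_vec M"
      show "post x = gcm x * indicator R x / PR"
        unfolding postdef vu vp unx[OF x] gcmx[OF x] using Cpos K1V by (simp add: field_simps)
    qed
    show "\<forall>w\<in>carrier_vec M.
            let \<zeta>rep = minv (H\<^sup>T * H) *\<^sub>v (H\<^sup>T *\<^sub>v w);
                qrep = Q\<^sup>T *\<^sub>v w;
                yrep = E *\<^sub>v w;
                yhat = E *\<^sub>v (H *\<^sub>v \<zeta>rep)
            in g qrep = scalar_prod (yrep - yhat) (yrep - yhat)" by (rule P2)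
  qed

qed


end
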